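(* Let $\mathit{HWQ}$ be the Herlihy\&Wing queue described in the context, with the dequeue linearization point $lin(deq,d,k)$ emitted exactly when a dequeue $k$ executes a $\mathtt{swap}$ returning a non-null value $d$. Then there exists a $(C\cup R\cup Lin(deq))$-forward simulation from $\mathit{HWQ}$ to $AbsQ$; consequently $\mathit{HWQ}$ is a $(C\cup R\cup Lin(deq))$-refinement of $AbsQ_0$, and in particular refines (is linearizable with respect to) $AbsQ_0$.
   Context: $\mathit{HWQ}$ is the queue implementation (methods $enq$, $deq$; values $\mathbb{N}\cup\{\mathtt{EMPTY}\}$, no value enqueued twice) whose shared state is an unbounded array $\mathtt{items}$ (all entries initially $\mathtt{null}$) and an integer counter $\mathtt{back}$ (initially $0$), executed by arbitrarily many concurrent operations, each statement being atomic. $enq(x)$: $\mathtt{i} := \mathtt{back}$; $\mathtt{back}:=\mathtt{back}+1$ (one atomic step); then $\mathtt{items[i]} := x$; return. $deq()$: repeat forever: $\mathtt{range}:=\mathtt{back}-1$; for $\mathtt{i}=0,\dots,\mathtt{range}$: $\mathtt{x}:=\mathtt{swap}(\mathtt{items[i]},\mathtt{null})$ (atomically read $\mathtt{items[i]}$ into $\mathtt{x}$ and set it to $\mathtt{null}$); if $\mathtt{x}\ne\mathtt{null}$ return $\mathtt{x}$. It is viewed as an LTS whose labels are call/return actions, $lin(deq,d,k)$ actions as stated, and internal (non-observable) actions for all other steps. Call actions $inv(m,d,k)$ and return actions $ret(m,d,k)$ form sets $C,R$; $Lin(deq)=\{lin(deq,d,k)\}$; traces of an LTS are label sequences of finite executions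 from the initial state and $Tr(A)|\Gamma$ their projections onto $\Gamma$. A $\Gamma$-refinement of $L_2$ by $L_1$ means $Tr(L_1)|\Gamma\subseteq Tr(L_2)|\Gamma$; refinement means $H(L_1)\subseteq H(L_2)$ with $H$ the projections of traces onto $C\cup R$. A $\Gamma$-forward simulation from $L_1$ to $L_2$ (with $C\cup R\subseteq\Gamma\subseteq\Sigma_1\cap\Sigma_2$) is a relation $fs$ between states with $fs[s^1_0]=\{s^2_0\}$ such that every $L_1$-step $s\xrightarrow{\gamma}s'$ with $\gamma\in\Gamma$ and $u\in fs[s]$ is matched by $u\xrightarrow{\sigma}u'$ with $u'\in fs[s']$, $\sigma$ containing $\gamma$ exactly once and otherwise only labels in $\Sigma_2\setminus\Gamma$; and every step with label $e\notin\Gamma$ is matched by $u\xrightarrow{\sigma}u'$, $u'\in fs[s']$, $\sigma\in(\Sigma_2\setminus\Gamma)^*$. $AbsQ_0$: states $(\sigma,in,rv,cp)$; $inv(enq,d,k)$: $in(k)=d,cp(k)=A_1$; $lin(enq,d,k)$ ($cp(k)=A_1$, $in(k)=d$): $\sigma:=d\cdot\sigma$, $cp(k)=A$; $ret(enq,k)$ ($cp(k)=A$): $cp(k)=A_2$; $inv(deq,k)$: $cp(k)=R_1$; $lin(deq,d,k)$ ($cp(k)=R_1$, $\sigma=\sigma'\cdot d$): $\sigma:=\sigma'$, $rv(k)=d$, $cp(k)=R_2$; $lin(deq,\mathtt{EMPTY},k)$ ($cp(k)=R_1,\sigma=\epsilon$): $rv(k)=\mathtt{EMPTY}$, $cp(k)=R_2$;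 $ret(deq,d,k)$ ($cp(k)=R_2,rv(k)=d$): $cp(k)=R_3$; calls require $k\notin dom(cp)$ and enqueued values $\ne\mathtt{EMPTY}$. $AbsQ$: alphabet $C\cup R\cup Lin(deq)$; states $(O,<,\ell,rv,cp)$, $O\subseteq\mathbb{N}$, $<$ strict partial order on $O$, $\ell:O\to\mathit{Vals}\times\{\mathtt{PEND},\mathtt{COMP}\}$, $rv,cp$ partial functions; initially all empty. $inv(enq,d,k)$ ($k\notin dom(cp)$, $d\ne\mathtt{EMPTY}$): add $k$ to $O$ ordered after every $k''\in O$ with $\ell_2(k'')=\mathtt{COMP}$, $\ell(k)=(d,\mathtt{PEND})$, $cp(k)=A_1$; $ret(enq,k)$ ($cp(k)=A_1$): if $k\in O$ change its flag to $\mathtt{COMP}$; set $cp(k)=A_2$; $inv(deq,k)$: $cp(k)=R_1$; $lin(deq,d,k)$ ($cp(k)=R_1$, $d\ne\mathtt{EMPTY}$, some $<$-minimal $k'\in O$ has $\ell_1(k')=d$): remove $k'$ from $O$ and from $<$, $rv(k)=d$, $cp(k)=R_2$; $lin(deq,\mathtt{EMPTY},k)$ ($cp(k)=R_1$, every $o\in O$ flagged $\mathtt{PEND}$): $rv(k)=\mathtt{EMPTY}$, $cp(k)=R_2$; $ret(deq,d,k)$ ($cp(k)=R_2$, $rv(k)=d$): $cp(k)=R_3$. *)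

theory Defs
  imports Main
begin

datatype val = Val nat | EMPTY

datatype act =
    InvEnq val nat
  | InvDeq nat
  | RetEnq nat
  | RetDeq val nat
  | LinEnq val nat
  | LinDeq val nat
  | Tau

definition Calls :: "act set" where
  "Calls = {a. \<exists>d k. a = InvEnq d k} \<union> {a. \<exists>k. a = InvDeq k}"

definition Rets :: "act set" where
  "Rets = {a. \<exists>k. a = RetEnq k} \<union> {a. \<exists>d k. a = RetDeq d k}"

definition LinDeqs :: "act set" where
  "LinDeqs = {a. \<exists>d k. a = LinDeq d k}"

definition LinEnqs :: "act set" where
  "LinEnqs = {a. \<exists>d k. a = LinEnq d k}"

record ('s, 'l) lts =
  init  :: 's
  alpha :: "'l set"
  trans :: "'s \<Rightarrow> 'l \<Rightarrow> 's \<Rightarrow> bool"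

inductive steps :: "('s, 'l) lts \<Rightarrow> 's \<Rightarrow> 'l list \<Rightarrow> 's \<Rightarrow> bool" for L where
  steps_nil:  "steps L s [] s"
| steps_cons: "trans L s a s' \<Longrightarrow> steps L s' w s'' \<Longrightarrow> steps L s (a # w) s''"

definition traces :: "('s, 'l) lts \<Rightarrow> 'l list set" where
  "traces L = {w. \<exists>s. steps L (init L) w s}"

definition proj :: "'l set \<Rightarrow> 'l list \<Rightarrow> 'l list" where
  "proj G w = filter (\<lambda>a. a \<in> G) w"

definition proj_traces :: "('s, 'l) lts \<Rightarrow> 'l set \<Rightarrow> 'l list set" where
  "proj_traces L G = proj G ` traces L"

definition gamma_refines :: "'l set \<Rightarrow> ('s1, 'l) lts \<Rightarrow> ('s2, 'l) lts \<Rightarrow> bool" where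
  "gamma_refines G L1 L2 \<longleftrightarrow> proj_traces L1 G \<subseteq> proj_traces L2 G"

definition refines :: "('s1, act) lts \<Rightarrow> ('s2, act) lts \<Rightarrow> bool" where
  "refines L1 L2 \<longleftrightarrow> proj_traces L1 (Calls \<union> Rets) \<subseteq> proj_traces L2 (Calls \<union> Rets)"

definition is_fwd_sim ::
  "act set \<Rightarrow> ('s1, act) lts \<Rightarrow> ('s2, act) lts \<Rightarrow> ('s1 \<Rightarrow> 's2 \<Rightarrow> bool) \<Rightarrow> bool" where
  "is_fwd_sim G L1 L2 fs \<longleftrightarrow>
     Calls \<union> Rets \<subseteq> G \<and> G \<subseteq> alpha L1 \<inter> alpha L2 \<and>
     {u. fs (init L1) u} = {init L2} \<and>
     (\<forall>s g s' u. trans L1 s g s' \<and> g \<in> G \<and> fs s u \<longrightarrow>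
        (\<exists>u' w1 w2. steps L2 u (w1 @ [g] @ w2) u' \<and> fs s' u' \<and>
           set w1 \<subseteq> alpha L2 - G \<and> set w2 \<subseteq> alpha L2 - G)) \<and>
     (\<forall>s e s' u. trans L1 s e s' \<and> e \<notin> G \<and> fs s u \<longrightarrow>
        (\<exists>u' w. steps L2 u w u' \<and> fs s' u' \<and> set w \<subseteq> alpha L2 - G))"

text \<open>Local control state of an operation k:
  E1 x: enq(x) invoked, about to do i := back; back := back + 1;
  E2 x i: about to do items[i] := x;  E3: about to return;
  DStart: deq at the head of its outer loop, about to read range := back - 1;
  DLoop n i: deq in its inner loop with n = range + 1 (the read value of back),
    about to swap items[i] if i < n, otherwise about to restart the outer loop;
  DRet x: swap returned x, about to return x;  Done: operation has returned.\<close>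
datatype hpc = E1 nat | E2 nat nat | E3 | DStart | DLoop nat nat | DRet nat | Done

record hstate =
  items :: "nat \<Rightarrow> nat option"
  hback  :: nat
  pc    :: "nat \<Rightarrow> hpc option"
  used  :: "nat set"

definition hwq_init :: hstate where
  "hwq_init = \<lparr>items = (\<lambda>_. None), hback = 0, pc = (\<lambda>_. None), used = {}\<rparr>"

fun hwq_step :: "hstate \<Rightarrow> act \<Rightarrow> hstate \<Rightarrow> bool" where
  "hwq_step s (InvEnq d k) s' \<longleftrightarrow>
     pc s k = None \<and>
     (\<exists>x. d = Val x \<and> x \<notin> used s \<and>
          s' = s\<lparr>pc := (pc s)(k \<mapsto> E1 x), used := insert x (used s)\<rparr>)"
| "hwq_step s (InvDeq k) s' \<longleftrightarrow>
     pc s k = None \<and> s' = s\<lparr>pc := (pc s)(k \<mapsto> DStart)\<rparr>"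
| "hwq_step s (RetEnq k) s' \<longleftrightarrow>
     pc s k = Some E3 \<and> s' = s\<lparr>pc := (pc s)(k \<mapsto> Done)\<rparr>"
| "hwq_step s (RetDeq d k) s' \<longleftrightarrow>
     (\<exists>x. pc s k = Some (DRet x) \<and> d = Val x \<and> s' = s\<lparr>pc := (pc s)(k \<mapsto> Done)\<rparr>)"
| "hwq_step s (LinEnq d k) s' \<longleftrightarrow> False"
| "hwq_step s (LinDeq d k) s' \<longleftrightarrow>
     (\<exists>n i x. pc s k = Some (DLoop n i) \<and> i < n \<and> items s i = Some x \<and> d = Val x \<and>
        s' = s\<lparr>items := (items s)(i := None), pc := (pc s)(k \<mapsto> DRet x)\<rparr>)"
| "hwq_step s Tau s' \<longleftrightarrow>
     (\<exists>k.
        (\<exists>x. pc s k = Some (E1 x) \<and>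
             s' = s\<lparr>hback := Suc (hback s), pc := (pc s)(k \<mapsto> E2 x (hback s))\<rparr>)
      \<or> (\<exists>x i. pc s k = Some (E2 x i) \<and>
             s' = s\<lparr>items := (items s)(i \<mapsto> x), pc := (pc s)(k \<mapsto> E3)\<rparr>)
      \<or> (pc s k = Some DStart \<and> s' = s\<lparr>pc := (pc s)(k \<mapsto> DLoop (hback s) 0)\<rparr>)
      \<or> (\<exists>n i. pc s k = Some (DLoop n i) \<and> i < n \<and> items s i = None \<and>
             s' = s\<lparr>pc := (pc s)(k \<mapsto> DLoop n (Suc i))\<rparr>)
      \<or> (\<exists>n i. pc s k = Some (DLoop n i) \<and> n \<le> i \<and>
             s' = s\<lparr>pc := (pc s)(k \<mapsto> DStart)\<rparr>))"

definition HWQ :: "(hstate, act) lts" where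
  "HWQ = \<lparr>init = hwq_init, alpha = Calls \<union> Rets \<union> LinDeqs \<union> {Tau}, trans = hwq_step\<rparr>"

datatype cpc = A1 | A | A2 | R1 | R2 | R3

record q0state =
  q :: "val list"
  qin :: "nat \<Rightarrow> val option"
  qrv :: "nat \<Rightarrow> val option"
  qcp :: "nat \<Rightarrow> cpc option"

definition absq0_init :: q0state where
  "absq0_init = \<lparr>q = [], qin = (\<lambda>_. None), qrv = (\<lambda>_. None), qcp = (\<lambda>_. None)\<rparr>"

fun absq0_step :: "q0state \<Rightarrow> act \<Rightarrow> q0state \<Rightarrow> bool" where
  "absq0_step s (InvEnq d k) s' \<longleftrightarrow>
     k \<notin> dom (qcp s) \<and> d \<noteq> EMPTY \<and>
     s' = s\<lparr>qin := (qin s)(k \<mapsto> d), qcp := (qcp s)(k \<mapsto> A1)\<rparr>"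
| "absq0_step s (LinEnq d k) s' \<longleftrightarrow>
     qcp s k = Some A1 \<and> qin s k = Some d \<and>
     s' = s\<lparr>q := d # q s, qcp := (qcp s)(k \<mapsto> A)\<rparr>"
| "absq0_step s (RetEnq k) s' \<longleftrightarrow>
     qcp s k = Some A \<and> s' = s\<lparr>qcp := (qcp s)(k \<mapsto> A2)\<rparr>"
| "absq0_step s (InvDeq k) s' \<longleftrightarrow>
     k \<notin> dom (qcp s) \<and> s' = s\<lparr>qcp := (qcp s)(k \<mapsto> R1)\<rparr>"
| "absq0_step s (LinDeq d k) s' \<longleftrightarrow>
     qcp s k = Some R1 \<and>
     ((\<exists>\<sigma>'. q s = \<sigma>' @ [d] \<and>
          s' = s\<lparr>q := \<sigma>', qrv := (qrv s)(k \<mapsto> d), qcp := (qcp s)(k \<mapsto> R2)\<rparr>)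
      \<or> (d = EMPTY \<and> q s = [] \<and>
          s' = s\<lparr>qrv := (qrv s)(k \<mapsto> EMPTY), qcp := (qcp s)(k \<mapsto> R2)\<rparr>))"
| "absq0_step s (RetDeq d k) s' \<longleftrightarrow>
     qcp s k = Some R2 \<and> qrv s k = Some d \<and> s' = s\<lparr>qcp := (qcp s)(k \<mapsto> R3)\<rparr>"
| "absq0_step s Tau s' \<longleftrightarrow> False"

definition AbsQ0 :: "(q0state, act) lts" where
  "AbsQ0 = \<lparr>init = absq0_init, alpha = Calls \<union> Rets \<union> LinEnqs \<union> LinDeqs, trans = absq0_step\<rparr>"

datatype flag = PEND | COMP

text \<open>aord is the strict partial order <, as a set of pairs: (a, b) \<in> aord means a < b.
  alab is the labelling function on O (partial; None outside O).\<close>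
record aqstate =
  aO   :: "nat set"
  aord :: "(nat \<times> nat) set"
  alab :: "nat \<Rightarrow> (val \<times> flag) option"
  arv  :: "nat \<Rightarrow> val option"
  acp  :: "nat \<Rightarrow> cpc option"

definition absq_init :: aqstate where
  "absq_init = \<lparr>aO = {}, aord = {}, alab = (\<lambda>_. None), arv = (\<lambda>_. None), acp = (\<lambda>_. None)\<rparr>"

fun absq_step :: "aqstate \<Rightarrow> act \<Rightarrow> aqstate \<Rightarrow> bool" where
  "absq_step s (InvEnq d k) s' \<longleftrightarrow>
     k \<notin> dom (acp s) \<and> d \<noteq> EMPTY \<and>
     s' = s\<lparr>aO := insert k (aO s),
            aord := aord s \<union> {(k'', k) | k'' v. k'' \<in> aO s \<and> alab s k'' = Some (v, COMP)},
            alab := (alab s)(k \<mapsto> (d, PEND)),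
            acp := (acp s)(k \<mapsto> A1)\<rparr>"
| "absq_step s (RetEnq k) s' \<longleftrightarrow>
     acp s k = Some A1 \<and>
     s' = s\<lparr>alab := (if k \<in> aO s then (alab s)(k \<mapsto> (fst (the (alab s k)), COMP)) else alab s),
            acp := (acp s)(k \<mapsto> A2)\<rparr>"
| "absq_step s (InvDeq k) s' \<longleftrightarrow>
     k \<notin> dom (acp s) \<and> s' = s\<lparr>acp := (acp s)(k \<mapsto> R1)\<rparr>"
| "absq_step s (LinDeq d k) s' \<longleftrightarrow>
     acp s k = Some R1 \<and>
     ((d \<noteq> EMPTY \<and>
        (\<exists>k' f. k' \<in> aO s \<and> (\<forall>k''\<in>aO s. (k'', k') \<notin> aord s) \<and> alab s k' = Some (d, f) \<and>
           s' = s\<lparr>aO := aO s - {k'},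
                  aord := {(a, b). (a, b) \<in> aord s \<and> a \<noteq> k' \<and> b \<noteq> k'},
                  alab := (alab s)(k' := None),
                  arv := (arv s)(k \<mapsto> d),
                  acp := (acp s)(k \<mapsto> R2)\<rparr>))
      \<or> (d = EMPTY \<and> (\<forall>j\<in>aO s. \<exists>v. alab s j = Some (v, PEND)) \<and>
          s' = s\<lparr>arv := (arv s)(k \<mapsto> EMPTY), acp := (acp s)(k \<mapsto> R2)\<rparr>))"
| "absq_step s (RetDeq d k) s' \<longleftrightarrow>
     acp s k = Some R2 \<and> arv s k = Some d \<and> s' = s\<lparr>acp := (acp s)(k \<mapsto> R3)\<rparr>"
| "absq_step s (LinEnq d k) s' \<longleftrightarrow> False"
| "absq_step s Tau s' \<longleftrightarrow> False"

definition AbsQ :: "(aqstate, act) lts" where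
  "AbsQ = \<lparr>init = absq_init, alpha = Calls \<union> Rets \<union> LinDeqs, trans = absq_step\<rparr>"

end

theory Submission
  imports Defs
begin


definition "C_none s u \<longleftrightarrow> (\<forall>k. pc s k = None \<longleftrightarrow> acp u k = None)"
definition "C_E1 s u \<longleftrightarrow> (\<forall>k x. pc s k = Some (E1 x) \<longrightarrow> acp u k = Some A1 \<and> k \<in> aO u \<and> alab u k = Some (Val x, PEND))"
definition "C_E2 s u ix \<longleftrightarrow> (\<forall>k x i. pc s k = Some (E2 x i) \<longrightarrow> acp u k = Some A1 \<and> k \<in> aO u \<and> alab u k = Some (Val x, PEND) \<and> ix k = i \<and> i < hback s)"
definition "C_E3 s u ix \<longleftrightarrow> (\<forall>k. pc s k = Some E3 \<longrightarrow> acp u k = Some A1 \<and> (k \<in> aO u \<longrightarrow> (\<exists>x. alab u k = Some (Val x, PEND) \<and> items s (ix k) = Some x \<and> ix k < hback s)))"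
definition "C_Done s u ix \<longleftrightarrow> (\<forall>k. pc s k = Some Done \<longrightarrow> (acp u k = Some A2 \<or> acp u k = Some R3) \<and> (k \<in> aO u \<longrightarrow> (\<exists>x. alab u k = Some (Val x, COMP) \<and> items s (ix k) = Some x \<and> ix k < hback s)))"
definition "C_DS s u \<longleftrightarrow> (\<forall>k. pc s k = Some DStart \<longrightarrow> acp u k = Some R1)"
definition "C_DL s u ix \<longleftrightarrow> (\<forall>k n i. pc s k = Some (DLoop n i) \<longrightarrow> acp u k = Some R1 \<and> n \<le> hback s \<and>
     (\<forall>a b. (a,b) \<in> aord u \<longrightarrow> ix a < i \<longrightarrow> (\<exists>x. pc s b = Some (E1 x)) \<or> n \<le> ix b))"
definition "C_DR s u \<longleftrightarrow> (\<forall>k x. pc s k = Some (DRet x) \<longrightarrow> acp u k = Some R2 \<and> arv u k = Some (Val x))"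
definition "C_Oacp u \<longleftrightarrow> (\<forall>k\<in>aO u. acp u k = Some A1 \<or> acp u k = Some A2)"
definition "C_lab u \<longleftrightarrow> (\<forall>k. alab u k \<noteq> None \<longrightarrow> k \<in> aO u)"
definition "C_arv u \<longleftrightarrow> (\<forall>k. acp u k \<noteq> Some R2 \<and> acp u k \<noteq> Some R3 \<longrightarrow> arv u k = None)"
definition "C_ord s u ix \<longleftrightarrow> (\<forall>a b. (a,b) \<in> aord u \<longrightarrow> a \<in> aO u \<and> b \<in> aO u \<and> (\<exists>v. alab u a = Some (v, COMP)) \<and>
     ((\<exists>x. pc s b = Some (E1 x)) \<or> ix a < ix b))"
definition "C_items s u ix \<longleftrightarrow> (\<forall>i x. items s i = Some x \<longrightarrow> (\<exists>k\<in>aO u. ix k = i \<and> (pc s k = Some E3 \<or> pc s k = Some Done) \<and> (\<exists>f. alab u k = Some (Val x, f))))"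
definition "C_uniq s u ix \<longleftrightarrow> (\<forall>k1 k2. k1 \<in> aO u \<longrightarrow> k2 \<in> aO u \<longrightarrow> (\<nexists>x. pc s k1 = Some (E1 x)) \<longrightarrow> (\<nexists>x. pc s k2 = Some (E1 x)) \<longrightarrow> ix k1 = ix k2 \<longrightarrow> k1 = k2)"

definition INV :: "hstate \<Rightarrow> aqstate \<Rightarrow> (nat \<Rightarrow> nat) \<Rightarrow> bool" where
"INV s u ix \<longleftrightarrow> C_none s u \<and> C_E1 s u \<and> C_E2 s u ix \<and> C_E3 s u ix \<and> C_Done s u ix \<and> C_DS s u \<and> C_DL s u ix
  \<and> C_DR s u \<and> C_Oacp u \<and> C_lab u \<and> C_arv u \<and> C_ord s u ix \<and> C_items s u ix \<and> C_uniq s u ix"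

lemmas Cdefs = C_none_def C_E1_def C_E2_def C_E3_def C_Done_def C_DS_def C_DL_def C_DR_def C_Oacp_def C_lab_def C_arv_def
  C_ord_def C_items_def C_uniq_def

lemma INV_init: "INV hwq_init absq_init ix"
  by (simp add: INV_def Cdefs hwq_init_def absq_init_def)

lemma INV_init_unique: "INV hwq_init u ix \<Longrightarrow> u = absq_init"
  unfolding INV_def Cdefs hwq_init_def absq_init_def
  apply (cases u)
  apply (auto simp: fun_eq_iff)
  by (metis not_None_eq surj_pair)

lemma C_DL_frame:
  assumes "C_DL s u ix"
    and "\<forall>j n i. pc s' j = Some (DLoop n i) \<longrightarrow> pc s j = Some (DLoop n i) \<and> acp u' j = Some R1"
    and "hback s \<le> hback s'"
    and "\<forall>a b. (a,b) \<in> aord u' \<longrightarrow> (a,b) \<in> aord u \<or> (\<exists>x. pc s' b = Some (E1 x))"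
    and "\<forall>b x. pc s b = Some (E1 x) \<longrightarrow> (\<exists>x. pc s' b = Some (E1 x))"
  shows "C_DL s' u' ix"
  unfolding C_DL_def
proof (intro allI impI conjI)
  fix j n i assume p: "pc s' j = Some (DLoop n i)"
  then have p0: "pc s j = Some (DLoop n i)" and "acp u' j = Some R1" using assms(2) by auto
  then show "acp u' j = Some R1" by simp
  show "n \<le> hback s'" using p0 assms(1,3) unfolding C_DL_def by fastforce
  fix a b assume ab: "(a, b) \<in> aord u'" "ix a < i"
  show "(\<exists>x. pc s' b = Some (E1 x)) \<or> n \<le> ix b"
  proof (cases "(a,b) \<in> aord u")
    case True
    then have "(\<exists>x. pc s b = Some (E1 x)) \<or> n \<le> ix b" using assms(1) p0 ab(2) unfolding C_DL_def by blast
    then show ?thesis using assms(5) by blast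
  next
    case False then show ?thesis using assms(4) ab by blast
  qed
qed

lemma C_items_frame:
  assumes "C_items s u ix" "items s' = items s"
    and "\<forall>j\<in>aO u. (pc s j = Some E3 \<or> pc s j = Some Done) \<longrightarrow> j \<in> aO u' \<and> ix' j = ix j \<and>
          (pc s' j = Some E3 \<or> pc s' j = Some Done) \<and> (\<forall>x f. alab u j = Some (Val x, f) \<longrightarrow> (\<exists>f'. alab u' j = Some (Val x, f')))"
  shows "C_items s' u' ix'"
  unfolding C_items_def
proof (intro allI impI)
  fix i x assume "items s' i = Some x"
  then obtain j f where "j \<in> aO u" "ix j = i" "pc s j = Some E3 \<or> pc s j = Some Done" "alab u j = Some (Val x, f)"
    using assms(1,2) unfolding C_items_def by force
  then show "\<exists>k\<in>aO u'. ix' k = i \<and> (pc s' k = Some E3 \<or> pc s' k = Some Done) \<and> (\<exists>f. alab u' k = Some (Val x, f))"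
    using assms(3) by metis
qed

lemma C_ord_frame:
  assumes "C_ord s u ix" "\<And>b. (\<exists>x. pc s' b = Some (E1 x)) \<longleftrightarrow> (\<exists>x. pc s b = Some (E1 x))"
  shows "C_ord s' u ix"
  using assms unfolding C_ord_def by simp

lemma step_InvEnq:
  assumes I: "INV s u ix" and h: "hwq_step s (InvEnq d k) s'"
  shows "\<exists>u'. absq_step u (InvEnq d k) u' \<and> INV s' u' ix"
proof -
  from h obtain x where pk: "pc s k = None" and d: "d = Val x"
    and s': "s' = s\<lparr>pc := (pc s)(k \<mapsto> E1 x), used := insert x (used s)\<rparr>" by auto
  from I have c: "C_none s u" "C_E1 s u" "C_E2 s u ix" "C_E3 s u ix" "C_Done s u ix" "C_DS s u" "C_DL s u ix"
  "C_DR s u" "C_Oacp u" "C_lab u" "C_arv u" "C_ord s u ix" "C_items s u ix" "C_uniq s u ix"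
    by (simp_all add: INV_def)
  have ak: "acp u k = None" using c pk by (simp add: C_none_def)
  have kO: "k \<notin> aO u" using c ak by (force simp: C_Oacp_def)
  define u' where "u' = u\<lparr>aO := insert k (aO u),
            aord := aord u \<union> {(k'', k) | k'' v. k'' \<in> aO u \<and> alab u k'' = Some (v, COMP)},
            alab := (alab u)(k \<mapsto> (d, PEND)),
            acp := (acp u)(k \<mapsto> A1)\<rparr>"
  have "absq_step u (InvEnq d k) u'" using ak d u'_def by auto
  moreover have "INV s' u' ix"
    unfolding INV_def
  proof (intro conjI)
    show "C_none s' u'" using c(1) unfolding s' u'_def C_none_def by auto
    show "C_E1 s' u'" using c(2) unfolding s' u'_def C_E1_def d by auto
    show "C_E2 s' u' ix" using c(3) pk unfolding s' u'_def C_E2_def d by auto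
    show "C_E3 s' u' ix" using c(4) pk unfolding s' u'_def C_E3_def d by auto
    show "C_Done s' u' ix" using c(5) pk unfolding s' u'_def C_Done_def d by auto
    show "C_DS s' u'" using c(6) pk unfolding s' u'_def C_DS_def d by auto
    show "C_DL s' u' ix" unfolding s' u'_def by (rule C_DL_frame[OF c(7)]) (insert c(7) pk, auto simp: C_DL_def)
    show "C_DR s' u'" using c(8) pk unfolding s' u'_def C_DR_def d by auto
    show "C_Oacp u'" using c(9) pk unfolding s' u'_def C_Oacp_def d by auto
    show "C_lab u'" using c(10) pk unfolding s' u'_def C_lab_def d by auto
    show "C_arv u'" using c(11) ak unfolding s' u'_def C_arv_def d by auto
    show "C_ord s' u' ix" using c(12) kO unfolding s' u'_def C_ord_def d by auto
    show "C_items s' u' ix" unfolding s' u'_def by (rule C_items_frame[OF c(13)]) (insert pk, auto)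
    show "C_uniq s' u' ix" using c(14) pk unfolding s' u'_def C_uniq_def d by auto
  qed
  ultimately show ?thesis by blast
qed

lemma INV_D:
  assumes "INV s u ix"
  shows "C_none s u" "C_E1 s u" "C_E2 s u ix" "C_E3 s u ix" "C_Done s u ix" "C_DS s u" "C_DL s u ix"
  "C_DR s u" "C_Oacp u" "C_lab u" "C_arv u" "C_ord s u ix" "C_items s u ix" "C_uniq s u ix"
  using assms by (simp_all add: INV_def)

lemma O_enq:
  assumes "INV s u ix" "k \<in> aO u"
  shows "(\<exists>x. pc s k = Some (E1 x)) \<or> (\<exists>x i. pc s k = Some (E2 x i)) \<or> pc s k = Some E3 \<or> pc s k = Some Done"
proof -
  note c = INV_D[OF assms(1)]
  have a: "acp u k = Some A1 \<or> acp u k = Some A2" using c(9) assms(2) by (auto simp: C_Oacp_def)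
  show ?thesis
  proof (cases "pc s k")
    case None then show ?thesis using c(1) a by (auto simp: C_none_def)
  next
    case (Some p) then show ?thesis using a c(6,7,8)
      by (cases p) (auto simp: C_DS_def C_DL_def C_DR_def)
  qed
qed

lemma COMP_Done:
  assumes "INV s u ix" "k \<in> aO u" "alab u k = Some (v, COMP)"
  shows "pc s k = Some Done"
  using O_enq[OF assms(1,2)] INV_D[OF assms(1)] assms(2,3)
  by (auto simp: C_E1_def C_E2_def C_E3_def)

lemma assigned_lt:
  assumes "INV s u ix" "k \<in> aO u" "\<nexists>x. pc s k = Some (E1 x)"
  shows "ix k < hback s"
  using O_enq[OF assms(1,2)] INV_D[OF assms(1)] assms(2,3)
  by (auto simp: C_E2_def C_E3_def C_Done_def)

lemma step_InvDeq:
  assumes I: "INV s u ix" and h: "hwq_step s (InvDeq k) s'"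
  shows "\<exists>u'. absq_step u (InvDeq k) u' \<and> INV s' u' ix"
proof -
  from h have pk: "pc s k = None" and s': "s' = s\<lparr>pc := (pc s)(k \<mapsto> DStart)\<rparr>" by auto
  note c = INV_D[OF I]
  have ak: "acp u k = None" using c pk by (simp add: C_none_def)
  have kO: "k \<notin> aO u" using c ak by (force simp: C_Oacp_def)
  define u' where "u' = u\<lparr>acp := (acp u)(k \<mapsto> R1)\<rparr>"
  have "absq_step u (InvDeq k) u'" using ak u'_def by auto
  moreover have "INV s' u' ix"
    unfolding INV_def
  proof (intro conjI)
    show "C_none s' u'" using c(1) unfolding s' u'_def C_none_def by auto
    show "C_E1 s' u'" using c(2) pk unfolding s' u'_def C_E1_def by auto
    show "C_E2 s' u' ix" using c(3) pk unfolding s' u'_def C_E2_def by auto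
    show "C_E3 s' u' ix" using c(4) pk unfolding s' u'_def C_E3_def by auto
    show "C_Done s' u' ix" using c(5) pk unfolding s' u'_def C_Done_def by auto
    show "C_DS s' u'" using c(6) pk unfolding s' u'_def C_DS_def by auto
    show "C_DL s' u' ix" unfolding s' u'_def by (rule C_DL_frame[OF c(7)]) (insert c(7) pk, auto simp: C_DL_def)
    show "C_DR s' u'" using c(8) pk unfolding s' u'_def C_DR_def by auto
    show "C_Oacp u'" using c(9) kO unfolding s' u'_def C_Oacp_def by auto
    show "C_lab u'" using c(10) unfolding s' u'_def C_lab_def by auto
    show "C_arv u'" using c(11) ak unfolding s' u'_def C_arv_def by auto
    show "C_ord s' u' ix" using c(12) kO unfolding s' u'_def C_ord_def by auto
    show "C_items s' u' ix" unfolding s' u'_def by (rule C_items_frame[OF c(13)]) (insert pk, auto)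
    show "C_uniq s' u' ix" using c(14) pk unfolding s' u'_def C_uniq_def by auto
  qed
  ultimately show ?thesis by blast
qed

lemma step_RetEnq:
  assumes I: "INV s u ix" and h: "hwq_step s (RetEnq k) s'"
  shows "\<exists>u'. absq_step u (RetEnq k) u' \<and> INV s' u' ix"
proof -
  from h have pk: "pc s k = Some E3" and s': "s' = s\<lparr>pc := (pc s)(k \<mapsto> Done)\<rparr>" by auto
  note c = INV_D[OF I]
  have ak: "acp u k = Some A1" using c pk by (simp add: C_E3_def)
  define u' where "u' = u\<lparr>alab := (if k \<in> aO u then (alab u)(k \<mapsto> (fst (the (alab u k)), COMP)) else alab u),
            acp := (acp u)(k \<mapsto> A2)\<rparr>"
  have "absq_step u (RetEnq k) u'" using ak u'_def by auto
  moreover have "INV s' u' ix"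
    unfolding INV_def
  proof (intro conjI)
    show "C_none s' u'" using c(1) unfolding s' u'_def C_none_def by auto
    show "C_E1 s' u'" using c(2) pk unfolding s' u'_def C_E1_def by auto
    show "C_E2 s' u' ix" using c(3) pk unfolding s' u'_def C_E2_def by auto
    show "C_E3 s' u' ix" using c(4) pk unfolding s' u'_def C_E3_def by auto
    show "C_Done s' u' ix" using c(5) c(4) pk unfolding s' u'_def C_Done_def C_E3_def by auto
    show "C_DS s' u'" using c(6) pk unfolding s' u'_def C_DS_def by auto
    show "C_DL s' u' ix" unfolding s' u'_def by (rule C_DL_frame[OF c(7)]) (insert c(7) pk, auto simp: C_DL_def)
    show "C_DR s' u'" using c(8) pk unfolding s' u'_def C_DR_def by auto
    show "C_Oacp u'" using c(9) unfolding s' u'_def C_Oacp_def by auto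
    show "C_lab u'" using c(10) unfolding s' u'_def C_lab_def by auto
    show "C_arv u'" using c(11) ak unfolding s' u'_def C_arv_def by auto
    show "C_ord s' u' ix" unfolding C_ord_def
    proof (intro allI impI)
      fix a b assume "(a,b) \<in> aord u'"
      then have "(a,b) \<in> aord u" by (simp add: u'_def)
      with c(12) have "a \<in> aO u \<and> b \<in> aO u \<and> (\<exists>v. alab u a = Some (v, COMP)) \<and> ((\<exists>x. pc s b = Some (E1 x)) \<or> ix a < ix b)"
        unfolding C_ord_def by blast
      with pk show "a \<in> aO u' \<and> b \<in> aO u' \<and> (\<exists>v. alab u' a = Some (v, COMP)) \<and> ((\<exists>x. pc s' b = Some (E1 x)) \<or> ix a < ix b)"
        unfolding s' u'_def by auto
    qed
    show "C_items s' u' ix" unfolding s' u'_def by (rule C_items_frame[OF c(13)]) (insert pk, auto)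
    show "C_uniq s' u' ix" using c(14) pk unfolding s' u'_def C_uniq_def by auto
  qed
  ultimately show ?thesis by blast
qed

lemma step_RetDeq:
  assumes I: "INV s u ix" and h: "hwq_step s (RetDeq d k) s'"
  shows "\<exists>u'. absq_step u (RetDeq d k) u' \<and> INV s' u' ix"
proof -
  from h obtain x where pk: "pc s k = Some (DRet x)" and d: "d = Val x"
     and s': "s' = s\<lparr>pc := (pc s)(k \<mapsto> Done)\<rparr>" by auto
  note c = INV_D[OF I]
  have ak: "acp u k = Some R2" "arv u k = Some (Val x)" using c pk by (simp_all add: C_DR_def)
  have kO: "k \<notin> aO u" using c ak by (force simp: C_Oacp_def)
  define u' where "u' = u\<lparr>acp := (acp u)(k \<mapsto> R3)\<rparr>"
  have "absq_step u (RetDeq d k) u'" using ak u'_def d by auto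
  moreover have "INV s' u' ix"
    unfolding INV_def
  proof (intro conjI)
    show "C_none s' u'" using c(1) unfolding s' u'_def C_none_def by auto
    show "C_E1 s' u'" using c(2) pk unfolding s' u'_def C_E1_def by auto
    show "C_E2 s' u' ix" using c(3) pk unfolding s' u'_def C_E2_def by auto
    show "C_E3 s' u' ix" using c(4) pk unfolding s' u'_def C_E3_def by auto
    show "C_Done s' u' ix" using c(5) pk kO unfolding s' u'_def C_Done_def by auto
    show "C_DS s' u'" using c(6) pk unfolding s' u'_def C_DS_def by auto
    show "C_DL s' u' ix" unfolding s' u'_def by (rule C_DL_frame[OF c(7)]) (insert c(7) pk, auto simp: C_DL_def)
    show "C_DR s' u'" using c(8) pk unfolding s' u'_def C_DR_def by auto
    show "C_Oacp u'" using c(9) kO unfolding s' u'_def C_Oacp_def by auto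
    show "C_lab u'" using c(10) unfolding s' u'_def C_lab_def by auto
    show "C_arv u'" using c(11) ak unfolding s' u'_def C_arv_def by auto
    show "C_ord s' u' ix" using c(12) kO unfolding s' u'_def C_ord_def by auto
    show "C_items s' u' ix" unfolding s' u'_def by (rule C_items_frame[OF c(13)]) (insert pk, auto)
    show "C_uniq s' u' ix" using c(14) pk unfolding s' u'_def C_uniq_def by auto
  qed
  ultimately show ?thesis by blast
qed

lemma step_LinDeq:
  assumes I: "INV s u ix" and h: "hwq_step s (LinDeq d k) s'"
  shows "\<exists>u'. absq_step u (LinDeq d k) u' \<and> INV s' u' ix"
proof -
  from h obtain n i x where pk: "pc s k = Some (DLoop n i)" and "i < n" and it: "items s i = Some x"
     and d: "d = Val x"
     and s': "s' = s\<lparr>items := (items s)(i := None), pc := (pc s)(k \<mapsto> DRet x)\<rparr>" by auto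
  note c = INV_D[OF I]
  have ak: "acp u k = Some R1" using c pk by (simp add: C_DL_def)
  have kO: "k \<notin> aO u" using c ak by (force simp: C_Oacp_def)
  obtain k' f where k'O: "k' \<in> aO u" and ixk': "ix k' = i" and pk': "pc s k' = Some E3 \<or> pc s k' = Some Done"
    and lk': "alab u k' = Some (Val x, f)"
    using c(13) it unfolding C_items_def by blast
  have kk': "k \<noteq> k'" using kO k'O by auto
  have minimal: "\<forall>k''\<in>aO u. (k'', k') \<notin> aord u"
  proof (intro ballI notI)
    fix k'' assume "k'' \<in> aO u" "(k'', k') \<in> aord u"
    then have "ix k'' < i" using c(12) pk' ixk' unfolding C_ord_def by fastforce
    then have "(\<exists>x. pc s k' = Some (E1 x)) \<or> n \<le> ix k'"
      using c(7) pk \<open>(k'', k') \<in> aord u\<close> unfolding C_DL_def by blast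
    then show False using pk' ixk' \<open>i < n\<close> by auto
  qed
  have uq: "\<And>j. j \<in> aO u \<Longrightarrow> j \<noteq> k' \<Longrightarrow> \<nexists>x. pc s j = Some (E1 x) \<Longrightarrow> ix j \<noteq> i"
    using c(14) k'O pk' ixk' unfolding C_uniq_def by fastforce
  define u' where "u' = u\<lparr>aO := aO u - {k'},
                  aord := {(a, b). (a, b) \<in> aord u \<and> a \<noteq> k' \<and> b \<noteq> k'},
                  alab := (alab u)(k' := None),
                  arv := (arv u)(k \<mapsto> d),
                  acp := (acp u)(k \<mapsto> R2)\<rparr>"
  have "absq_step u (LinDeq d k) u'" using ak u'_def d k'O minimal lk' by auto
  moreover have "INV s' u' ix"
    unfolding INV_def
  proof (intro conjI)
    show "C_none s' u'" using c(1) unfolding s' u'_def C_none_def by auto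
    show "C_E1 s' u'" using c(2) pk pk' unfolding s' u'_def C_E1_def by auto
    show "C_E2 s' u' ix" using c(3) pk pk' unfolding s' u'_def C_E2_def by auto
    show "C_E3 s' u' ix" using c(4) pk uq unfolding s' u'_def C_E3_def by auto
    show "C_Done s' u' ix" using c(5) pk uq unfolding s' u'_def C_Done_def by auto
    show "C_DS s' u'" using c(6) pk unfolding s' u'_def C_DS_def by auto
    show "C_DL s' u' ix" unfolding s' u'_def by (rule C_DL_frame[OF c(7)]) (insert c(7) pk, auto simp: C_DL_def)
    show "C_DR s' u'" using c(8) pk d unfolding s' u'_def C_DR_def by auto
    show "C_Oacp u'" using c(9) kO unfolding s' u'_def C_Oacp_def by auto
    show "C_lab u'" using c(10) unfolding s' u'_def C_lab_def by auto
    show "C_arv u'" using c(11) ak unfolding s' u'_def C_arv_def by auto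
    show "C_ord s' u' ix" using c(12) kO unfolding s' u'_def C_ord_def by auto
    show "C_items s' u' ix" unfolding C_items_def
    proof (intro allI impI)
      fix j y assume "items s' j = Some y"
      then have "j \<noteq> i" "items s j = Some y" unfolding s' by (auto split: if_splits)
      then obtain k'' f where "k'' \<in> aO u" "ix k'' = j" "pc s k'' = Some E3 \<or> pc s k'' = Some Done" "alab u k'' = Some (Val y, f)"
        using c(13) unfolding C_items_def by blast
      moreover have "k'' \<noteq> k'" using \<open>j \<noteq> i\<close> ixk' \<open>ix k'' = j\<close> by auto
      moreover have "k'' \<noteq> k" using \<open>pc s k'' = Some E3 \<or> pc s k'' = Some Done\<close> pk by auto
      ultimately show "\<exists>k\<in>aO u'. ix k = j \<and> (pc s' k = Some E3 \<or> pc s' k = Some Done) \<and> (\<exists>f. alab u' k = Some (Val y, f))"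
        unfolding s' u'_def by auto
    qed
    show "C_uniq s' u' ix" using c(14) pk unfolding s' u'_def C_uniq_def by auto
  qed
  ultimately show ?thesis by blast
qed

lemma step_E1:
  assumes I: "INV s u ix" and pk: "pc s k = Some (E1 x)"
    and s': "s' = s\<lparr>hback := Suc (hback s), pc := (pc s)(k \<mapsto> E2 x (hback s))\<rparr>"
  shows "INV s' u (ix(k := hback s))"
proof -
  note c = INV_D[OF I]
  have kO: "k \<in> aO u" and lk: "alab u k = Some (Val x, PEND)" and ak: "acp u k = Some A1"
    using c(2) pk by (auto simp: C_E1_def)
  have ncomp: "\<And>a b. (a,b) \<in> aord u \<Longrightarrow> a \<noteq> k" using c(12) lk unfolding C_ord_def by force
  have lt: "\<And>j. j \<in> aO u \<Longrightarrow> \<nexists>x. pc s j = Some (E1 x) \<Longrightarrow> ix j < hback s" using assigned_lt[OF I] by blast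
  define ix' where "ix' = ix(k := hback s)"
  show ?thesis unfolding ix'_def[symmetric] INV_def
  proof (intro conjI)
    show "C_none s' u" using c(1) pk unfolding s' C_none_def by (auto, metis not_None_eq option.distinct(1))
    show "C_E1 s' u" using c(2) pk unfolding s' C_E1_def by auto
    show "C_E2 s' u ix'" using c(3) pk kO lk ak unfolding s' ix'_def C_E2_def by (auto, metis less_SucI)
    show "C_E3 s' u ix'" using c(4) pk unfolding s' ix'_def C_E3_def by auto
    show "C_Done s' u ix'" using c(5) pk unfolding s' ix'_def C_Done_def by auto
    show "C_DS s' u" using c(6) pk unfolding s' C_DS_def by auto
    show "C_DL s' u ix'" unfolding C_DL_def
    proof (intro allI impI conjI)
      fix j n i assume p: "pc s' j = Some (DLoop n i)"
      then have p0: "pc s j = Some (DLoop n i)" using pk unfolding s' by (auto split: if_splits)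
      then have o: "acp u j = Some R1 \<and> n \<le> hback s \<and> (\<forall>a b. (a,b) \<in> aord u \<longrightarrow> ix a < i \<longrightarrow> (\<exists>x. pc s b = Some (E1 x)) \<or> n \<le> ix b)"
        using c(7) unfolding C_DL_def by blast
      then show "acp u j = Some R1" "n \<le> hback s'" unfolding s' by auto
      fix a b assume ab: "(a,b) \<in> aord u" "ix' a < i"
      have "a \<noteq> k" using ncomp ab by blast
      then have "ix a < i" using ab unfolding ix'_def by auto
      then have "(\<exists>x. pc s b = Some (E1 x)) \<or> n \<le> ix b" using o ab by blast
      then show "(\<exists>x. pc s' b = Some (E1 x)) \<or> n \<le> ix' b" using o unfolding s' ix'_def by auto
    qed
    show "C_DR s' u" using c(8) pk unfolding s' C_DR_def by auto
    show "C_Oacp u" using c(9) by simp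
    show "C_lab u" using c(10) by simp
    show "C_arv u" using c(11) by simp
    show "C_ord s' u ix'" unfolding C_ord_def
    proof (intro allI impI)
      fix a b assume ab: "(a,b) \<in> aord u"
      with c(12) have o: "a \<in> aO u \<and> b \<in> aO u \<and> (\<exists>v. alab u a = Some (v, COMP)) \<and> ((\<exists>x. pc s b = Some (E1 x)) \<or> ix a < ix b)"
        unfolding C_ord_def by blast
      have ak: "a \<noteq> k" using ncomp ab by blast
      have "\<nexists>x. pc s a = Some (E1 x)" using o c(2) unfolding C_E1_def by force
      then have "ix a < hback s" using lt o by blast
      with o ak show "a \<in> aO u \<and> b \<in> aO u \<and> (\<exists>v. alab u a = Some (v, COMP)) \<and> ((\<exists>x. pc s' b = Some (E1 x)) \<or> ix' a < ix' b)"
        unfolding s' ix'_def by auto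
    qed
    show "C_items s' u ix'" unfolding s' by (rule C_items_frame[OF c(13)]) (insert pk, auto simp: ix'_def)
    show "C_uniq s' u ix'" unfolding C_uniq_def
    proof (intro allI impI)
      fix k1 k2 assume h: "k1 \<in> aO u" "k2 \<in> aO u" "\<nexists>x. pc s' k1 = Some (E1 x)" "\<nexists>x. pc s' k2 = Some (E1 x)" "ix' k1 = ix' k2"
      show "k1 = k2"
      proof (cases "k1 = k \<or> k2 = k")
        case True
        then show ?thesis using h lt pk unfolding s' ix'_def by (auto split: if_splits; metis less_irrefl)
      next
        case False
        then show ?thesis using h c(14) unfolding s' ix'_def C_uniq_def by auto
      qed
    qed
  qed
qed

lemma step_E2:
  assumes I: "INV s u ix" and pk: "pc s k = Some (E2 x i)"
    and s': "s' = s\<lparr>items := (items s)(i \<mapsto> x), pc := (pc s)(k \<mapsto> E3)\<rparr>"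
  shows "INV s' u ix"
proof -
  note c = INV_D[OF I]
  have kO: "k \<in> aO u" and lk: "alab u k = Some (Val x, PEND)" and ak: "acp u k = Some A1"
    and ik: "ix k = i" and ib: "i < hback s"
    using c(3) pk by (auto simp: C_E2_def)
  have uq: "\<And>j. j \<in> aO u \<Longrightarrow> j \<noteq> k \<Longrightarrow> \<nexists>x. pc s j = Some (E1 x) \<Longrightarrow> ix j \<noteq> i"
    using c(14) kO pk ik unfolding C_uniq_def by fastforce
  show ?thesis unfolding INV_def
  proof (intro conjI)
    show "C_none s' u" using c(1) pk unfolding s' C_none_def by (auto, metis not_None_eq option.distinct(1))
    show "C_E1 s' u" using c(2) pk unfolding s' C_E1_def by auto
    show "C_E2 s' u ix" using c(3) pk unfolding s' C_E2_def by auto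
    show "C_E3 s' u ix" using c(4) pk uq kO lk ak ik ib unfolding s' C_E3_def by auto
    show "C_Done s' u ix" using c(5) pk uq unfolding s' C_Done_def by auto
    show "C_DS s' u" using c(6) pk unfolding s' C_DS_def by auto
    show "C_DL s' u ix" unfolding s' by (rule C_DL_frame[OF c(7)]) (insert c(7) pk, auto simp: C_DL_def)
    show "C_DR s' u" using c(8) pk unfolding s' C_DR_def by auto
    show "C_Oacp u" using c(9) by simp
    show "C_lab u" using c(10) by simp
    show "C_arv u" using c(11) by simp
    show "C_ord s' u ix" unfolding C_ord_def
    proof (intro allI impI)
      fix a b assume ab: "(a,b) \<in> aord u"
      with c(12) have o: "a \<in> aO u \<and> b \<in> aO u \<and> (\<exists>v. alab u a = Some (v, COMP)) \<and> ((\<exists>x. pc s b = Some (E1 x)) \<or> ix a < ix b)"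
        unfolding C_ord_def by blast
      with pk show "a \<in> aO u \<and> b \<in> aO u \<and> (\<exists>v. alab u a = Some (v, COMP)) \<and> ((\<exists>x. pc s' b = Some (E1 x)) \<or> ix a < ix b)"
        unfolding s' by auto
    qed
    show "C_items s' u ix" unfolding C_items_def
    proof (intro allI impI)
      fix j y assume "items s' j = Some y"
      show "\<exists>k\<in>aO u. ix k = j \<and> (pc s' k = Some E3 \<or> pc s' k = Some Done) \<and> (\<exists>f. alab u k = Some (Val y, f))"
      proof (cases "j = i")
        case True
        then show ?thesis using \<open>items s' j = Some y\<close> kO ik lk unfolding s' by auto
      next
        case False
        then have "items s j = Some y" using \<open>items s' j = Some y\<close> unfolding s' by auto
        then obtain k' f where "k' \<in> aO u" "ix k' = j" "pc s k' = Some E3 \<or> pc s k' = Some Done" "alab u k' = Some (Val y, f)"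
          using c(13) unfolding C_items_def by blast
        then show ?thesis using pk unfolding s' by (auto split: if_splits)
      qed
    qed
    show "C_uniq s' u ix" using c(14) pk unfolding s' C_uniq_def by auto
  qed
qed

lemma step_DStart:
  assumes I: "INV s u ix" and pk: "pc s k = Some DStart"
    and s': "s' = s\<lparr>pc := (pc s)(k \<mapsto> DLoop (hback s) 0)\<rparr>"
  shows "INV s' u ix"
proof -
  note c = INV_D[OF I]
  have ak: "acp u k = Some R1" using c(6) pk by (auto simp: C_DS_def)
  show ?thesis unfolding INV_def
  proof (intro conjI)
    show "C_none s' u" using c(1) pk unfolding s' C_none_def by (auto, metis not_None_eq option.distinct(1))
    show "C_E1 s' u" using c(2) pk unfolding s' C_E1_def by auto
    show "C_E2 s' u ix" using c(3) pk unfolding s' C_E2_def by auto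
    show "C_E3 s' u ix" using c(4) pk unfolding s' C_E3_def by auto
    show "C_Done s' u ix" using c(5) pk unfolding s' C_Done_def by auto
    show "C_DS s' u" using c(6) pk unfolding s' C_DS_def by auto
    have e: "\<And>b. (\<exists>x. pc s' b = Some (E1 x)) \<longleftrightarrow> (\<exists>x. pc s b = Some (E1 x))" using pk unfolding s' by auto
    show "C_DL s' u ix" unfolding C_DL_def
    proof (intro allI impI)
      fix j m l assume p: "pc s' j = Some (DLoop m l)"
      show "acp u j = Some R1 \<and> m \<le> hback s' \<and> (\<forall>a b. (a, b) \<in> aord u \<longrightarrow> ix a < l \<longrightarrow> (\<exists>x. pc s' b = Some (E1 x)) \<or> m \<le> ix b)"
      proof (cases "j = k")
        case True then show ?thesis using p ak unfolding s' by auto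
      next
        case False then have "pc s j = Some (DLoop m l)" using p unfolding s' by auto
        with c(7) have o: "acp u j = Some R1 \<and> m \<le> hback s \<and> (\<forall>a b. (a, b) \<in> aord u \<longrightarrow> ix a < l \<longrightarrow> (\<exists>x. pc s b = Some (E1 x)) \<or> m \<le> ix b)"
          unfolding C_DL_def by blast
        then show ?thesis unfolding e by (simp add: s')
      qed
    qed
    show "C_DR s' u" using c(8) pk unfolding s' C_DR_def by auto
    show "C_Oacp u" using c(9) by simp
    show "C_lab u" using c(10) by simp
    show "C_arv u" using c(11) by simp
    show "C_ord s' u ix" by (rule C_ord_frame[OF c(12)]) (insert pk, auto simp: s')
    show "C_items s' u ix" unfolding s' by (rule C_items_frame[OF c(13)]) (insert pk, auto)
    show "C_uniq s' u ix" using c(14) pk unfolding s' C_uniq_def by auto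
  qed
qed

lemma step_Skip:
  assumes I: "INV s u ix" and pk: "pc s k = Some (DLoop n i)" and "i < n" and it: "items s i = None"
    and s': "s' = s\<lparr>pc := (pc s)(k \<mapsto> DLoop n (Suc i))\<rparr>"
  shows "INV s' u ix"
proof -
  note c = INV_D[OF I]
  have o: "acp u k = Some R1 \<and> n \<le> hback s \<and> (\<forall>a b. (a,b) \<in> aord u \<longrightarrow> ix a < i \<longrightarrow> (\<exists>x. pc s b = Some (E1 x)) \<or> n \<le> ix b)"
    using c(7) pk unfolding C_DL_def by blast
  have noti: "\<And>a b. (a,b) \<in> aord u \<Longrightarrow> ix a \<noteq> i"
  proof
    fix a b assume ab: "(a,b) \<in> aord u" "ix a = i"
    then obtain v where aO: "a \<in> aO u" and la: "alab u a = Some (v, COMP)" using c(12) unfolding C_ord_def by blast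
    have "pc s a = Some Done" using COMP_Done[OF I aO la] .
    then obtain y where "items s (ix a) = Some y" using c(5) aO unfolding C_Done_def by blast
    then show False using ab it by simp
  qed
  show ?thesis unfolding INV_def
  proof (intro conjI)
    show "C_none s' u" using c(1) pk unfolding s' C_none_def by (auto, metis not_None_eq option.distinct(1))
    show "C_E1 s' u" using c(2) pk unfolding s' C_E1_def by auto
    show "C_E2 s' u ix" using c(3) pk unfolding s' C_E2_def by auto
    show "C_E3 s' u ix" using c(4) pk unfolding s' C_E3_def by auto
    show "C_Done s' u ix" using c(5) pk unfolding s' C_Done_def by auto
    show "C_DS s' u" using c(6) pk unfolding s' C_DS_def by auto
    show "C_DL s' u ix" unfolding C_DL_def
    proof (intro allI impI conjI)
      fix j m l assume p: "pc s' j = Some (DLoop m l)"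
      show "acp u j = Some R1" "m \<le> hback s'"
      proof -
        have "acp u j = Some R1 \<and> m \<le> hback s"
        proof (cases "j = k")
          case True then show ?thesis using p o unfolding s' by auto
        next
          case False then show ?thesis using p c(7) unfolding s' C_DL_def by auto
        qed
        then show "acp u j = Some R1" "m \<le> hback s'" unfolding s' by auto
      qed
      fix a b assume ab: "(a,b) \<in> aord u" "ix a < l"
      show "(\<exists>x. pc s' b = Some (E1 x)) \<or> m \<le> ix b"
      proof (cases "j = k")
        case True
        then have "m = n" "l = Suc i" using p unfolding s' by auto
        then have "ix a < i" using ab noti[OF ab(1)] by auto
        then have "(\<exists>x. pc s b = Some (E1 x)) \<or> n \<le> ix b" using o ab by blast
        then show ?thesis using pk \<open>m = n\<close> unfolding s' by auto
      next
        case False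
        then have "pc s j = Some (DLoop m l)" using p unfolding s' by auto
        then have "(\<exists>x. pc s b = Some (E1 x)) \<or> m \<le> ix b" using c(7) ab unfolding C_DL_def by blast
        then show ?thesis using pk unfolding s' by auto
      qed
    qed
    show "C_DR s' u" using c(8) pk unfolding s' C_DR_def by auto
    show "C_Oacp u" using c(9) by simp
    show "C_lab u" using c(10) by simp
    show "C_arv u" using c(11) by simp
    show "C_ord s' u ix" by (rule C_ord_frame[OF c(12)]) (insert pk, auto simp: s')
    show "C_items s' u ix" unfolding s' by (rule C_items_frame[OF c(13)]) (insert pk, auto)
    show "C_uniq s' u ix" using c(14) pk unfolding s' C_uniq_def by auto
  qed
qed

lemma step_Restart:
  assumes I: "INV s u ix" and pk: "pc s k = Some (DLoop n i)"
    and s': "s' = s\<lparr>pc := (pc s)(k \<mapsto> DStart)\<rparr>"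
  shows "INV s' u ix"
proof -
  note c = INV_D[OF I]
  have ak: "acp u k = Some R1" using c(7) pk by (auto simp: C_DL_def)
  show ?thesis unfolding INV_def
  proof (intro conjI)
    show "C_none s' u" using c(1) pk unfolding s' C_none_def by (auto, metis not_None_eq option.distinct(1))
    show "C_E1 s' u" using c(2) pk unfolding s' C_E1_def by auto
    show "C_E2 s' u ix" using c(3) pk unfolding s' C_E2_def by auto
    show "C_E3 s' u ix" using c(4) pk unfolding s' C_E3_def by auto
    show "C_Done s' u ix" using c(5) pk unfolding s' C_Done_def by auto
    show "C_DS s' u" using c(6) pk ak unfolding s' C_DS_def by auto
    show "C_DL s' u ix" unfolding s' by (rule C_DL_frame[OF c(7)]) (insert c(7) pk, auto simp: C_DL_def)
    show "C_DR s' u" using c(8) pk unfolding s' C_DR_def by auto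
    show "C_Oacp u" using c(9) by simp
    show "C_lab u" using c(10) by simp
    show "C_arv u" using c(11) by simp
    show "C_ord s' u ix" by (rule C_ord_frame[OF c(12)]) (insert pk, auto simp: s')
    show "C_items s' u ix" unfolding s' by (rule C_items_frame[OF c(13)]) (insert pk, auto)
    show "C_uniq s' u ix" using c(14) pk unfolding s' C_uniq_def by auto
  qed
qed

lemma step_Tau:
  assumes I: "INV s u ix" and h: "hwq_step s Tau s'"
  shows "\<exists>ix'. INV s' u ix'"
proof -
  from h[unfolded hwq_step.simps] obtain k where
    "(\<exists>x. pc s k = Some (E1 x) \<and>
             s' = s\<lparr>hback := Suc (hback s), pc := (pc s)(k \<mapsto> E2 x (hback s))\<rparr>)
      \<or> (\<exists>x i. pc s k = Some (E2 x i) \<and>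
             s' = s\<lparr>items := (items s)(i \<mapsto> x), pc := (pc s)(k \<mapsto> E3)\<rparr>)
      \<or> (pc s k = Some DStart \<and> s' = s\<lparr>pc := (pc s)(k \<mapsto> DLoop (hback s) 0)\<rparr>)
      \<or> (\<exists>n i. pc s k = Some (DLoop n i) \<and> i < n \<and> items s i = None \<and>
             s' = s\<lparr>pc := (pc s)(k \<mapsto> DLoop n (Suc i))\<rparr>)
      \<or> (\<exists>n i. pc s k = Some (DLoop n i) \<and> n \<le> i \<and>
             s' = s\<lparr>pc := (pc s)(k \<mapsto> DStart)\<rparr>)" by blast
  then show ?thesis
  proof (elim disjE exE conjE)
    fix x assume "pc s k = Some (E1 x)" "s' = s\<lparr>hback := Suc (hback s), pc := (pc s)(k \<mapsto> E2 x (hback s))\<rparr>"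
    then show ?thesis using step_E1[OF I] by blast
  next
    fix x i assume "pc s k = Some (E2 x i)" "s' = s\<lparr>items := (items s)(i \<mapsto> x), pc := (pc s)(k \<mapsto> E3)\<rparr>"
    then show ?thesis using step_E2[OF I] by blast
  next
    assume "pc s k = Some DStart" "s' = s\<lparr>pc := (pc s)(k \<mapsto> DLoop (hback s) 0)\<rparr>"
    then show ?thesis using step_DStart[OF I] by blast
  next
    fix n i assume "pc s k = Some (DLoop n i)" "i < n" "items s i = None" "s' = s\<lparr>pc := (pc s)(k \<mapsto> DLoop n (Suc i))\<rparr>"
    then show ?thesis using step_Skip[OF I] by blast
  next
    fix n i assume "pc s k = Some (DLoop n i)" "s' = s\<lparr>pc := (pc s)(k \<mapsto> DStart)\<rparr>"
    then show ?thesis using step_Restart[OF I] by blast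
  qed
qed



definition Gam :: "act set" where "Gam = Calls \<union> Rets \<union> LinDeqs"

lemma steps_single: "trans L s a s' \<Longrightarrow> steps L s [a] s'"
  by (auto intro: steps.intros)

lemma steps_append: "steps L s w1 s' \<Longrightarrow> steps L s' w2 s'' \<Longrightarrow> steps L s (w1 @ w2) s''"
  by (induction rule: steps.induct) (auto intro: steps.intros)

lemma fwd_sim_HWQ: "is_fwd_sim Gam HWQ AbsQ (\<lambda>s u. \<exists>ix. INV s u ix)"
  unfolding is_fwd_sim_def
proof (intro conjI allI impI)
  show "Calls \<union> Rets \<subseteq> Gam" by (auto simp: Gam_def)
  show "Gam \<subseteq> alpha HWQ \<inter> alpha AbsQ" by (auto simp: Gam_def HWQ_def AbsQ_def)
  show "{u. \<exists>ix. INV (init HWQ) u ix} = {init AbsQ}"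
    using INV_init INV_init_unique by (auto simp: HWQ_def AbsQ_def)
next
  fix s g s' u
  assume a: "trans HWQ s g s' \<and> g \<in> Gam \<and> (\<exists>ix. INV s u ix)"
  then obtain ix where I: "INV s u ix" and h: "hwq_step s g s'" and g: "g \<in> Gam" by (auto simp: HWQ_def)
  have "\<exists>u'. absq_step u g u' \<and> INV s' u' ix"
    using g h step_InvEnq[OF I] step_InvDeq[OF I] step_RetEnq[OF I] step_RetDeq[OF I] step_LinDeq[OF I]
    by (auto simp: Gam_def Calls_def Rets_def LinDeqs_def)
  then obtain u' where "absq_step u g u'" "INV s' u' ix" by blast
  then show "\<exists>u' w1 w2. steps AbsQ u (w1 @ [g] @ w2) u' \<and> (\<exists>ix. INV s' u' ix) \<and>
           set w1 \<subseteq> alpha AbsQ - Gam \<and> set w2 \<subseteq> alpha AbsQ - Gam"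
    by (intro exI[of _ u'] exI[of _ "[]"]) (auto intro: steps_single simp: AbsQ_def)
next
  fix s e s' u
  assume a: "trans HWQ s e s' \<and> e \<notin> Gam \<and> (\<exists>ix. INV s u ix)"
  then obtain ix where I: "INV s u ix" and h: "hwq_step s e s'" and g: "e \<notin> Gam" by (auto simp: HWQ_def)
  have "e = Tau" using g h by (cases e) (auto simp: Gam_def Calls_def Rets_def LinDeqs_def)
  then obtain ix' where "INV s' u ix'" using step_Tau[OF I] h by blast
  then show "\<exists>u' w. steps AbsQ u w u' \<and> (\<exists>ix. INV s' u' ix) \<and> set w \<subseteq> alpha AbsQ - Gam"
    by (intro exI[of _ u] exI[of _ "[]"]) (auto intro: steps.intros)
qed

lemma fwd_simD1:
  assumes "is_fwd_sim G L1 L2 fs" "trans L1 s g s'" "g \<in> G" "fs s u"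
  shows "\<exists>u' w1 w2. steps L2 u (w1 @ [g] @ w2) u' \<and> fs s' u' \<and>
           set w1 \<subseteq> alpha L2 - G \<and> set w2 \<subseteq> alpha L2 - G"
proof -
  have "\<forall>s g s' u. trans L1 s g s' \<and> g \<in> G \<and> fs s u \<longrightarrow>
        (\<exists>u' w1 w2. steps L2 u (w1 @ [g] @ w2) u' \<and> fs s' u' \<and>
           set w1 \<subseteq> alpha L2 - G \<and> set w2 \<subseteq> alpha L2 - G)"
    using assms(1) unfolding is_fwd_sim_def by (elim conjE)
  then show ?thesis using assms(2,3,4) by blast
qed

lemma fwd_simD2:
  assumes "is_fwd_sim G L1 L2 fs" "trans L1 s e s'" "e \<notin> G" "fs s u"
  shows "\<exists>u' w. steps L2 u w u' \<and> fs s' u' \<and> set w \<subseteq> alpha L2 - G"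
proof -
  have "\<forall>s e s' u. trans L1 s e s' \<and> e \<notin> G \<and> fs s u \<longrightarrow>
        (\<exists>u' w. steps L2 u w u' \<and> fs s' u' \<and> set w \<subseteq> alpha L2 - G)"
    using assms(1) unfolding is_fwd_sim_def by (elim conjE)
  then show ?thesis using assms(2,3,4) by blast
qed

lemma proj_nil: "set w \<subseteq> alpha L - G \<Longrightarrow> proj G w = []"
  unfolding proj_def by (auto simp: filter_empty_conv)

lemma fwd_sim_traces:
  assumes F: "is_fwd_sim G L1 L2 fs"
  shows "steps L1 s w s' \<Longrightarrow> fs s u \<Longrightarrow> \<exists>u' w'. steps L2 u w' u' \<and> fs s' u' \<and> proj G w' = proj G w"
proof (induction arbitrary: u rule: steps.induct)
  case (steps_nil s)
  have "steps L2 u [] u" by (rule steps.steps_nil)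
  moreover have "proj G [] = proj G []" ..
  ultimately show ?case using steps_nil by blast
next
  case (steps_cons s a s1 w s'')
  show ?case
  proof (cases "a \<in> G")
    case True
    obtain u1 w1 w2 where st: "steps L2 u (w1 @ [a] @ w2) u1" and f1: "fs s1 u1"
      and w1: "set w1 \<subseteq> alpha L2 - G" and w2: "set w2 \<subseteq> alpha L2 - G"
      using fwd_simD1[OF F steps_cons.hyps(1) True steps_cons.prems] by blast
    obtain u' w' where st2: "steps L2 u1 w' u'" and f2: "fs s'' u'" and p: "proj G w' = proj G w"
      using steps_cons.IH[OF f1] by blast
    have "steps L2 u ((w1 @ [a] @ w2) @ w') u'" using st st2 by (rule steps_append)
    moreover have "proj G ((w1 @ [a] @ w2) @ w') = proj G (a # w)"
      using proj_nil[OF w1] proj_nil[OF w2] p True unfolding proj_def by simp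
    ultimately show ?thesis using f2 by blast
  next
    case False
    obtain u1 w1 where st: "steps L2 u w1 u1" and f1: "fs s1 u1" and w1: "set w1 \<subseteq> alpha L2 - G"
      using fwd_simD2[OF F steps_cons.hyps(1) False steps_cons.prems] by blast
    obtain u' w' where st2: "steps L2 u1 w' u'" and f2: "fs s'' u'" and p: "proj G w' = proj G w"
      using steps_cons.IH[OF f1] by blast
    have "steps L2 u (w1 @ w') u'" using st st2 by (rule steps_append)
    moreover have "proj G (w1 @ w') = proj G (a # w)"
      using proj_nil[OF w1] p False unfolding proj_def by simp
    ultimately show ?thesis using f2 by blast
  qed
qed

definition InvA0 :: "aqstate \<Rightarrow> bool" where
"InvA0 s \<longleftrightarrow> (\<forall>a b. (a,b) \<in> aord s \<longrightarrow> a \<in> aO s \<and> b \<in> aO s \<and> (\<exists>v. alab s a = Some (v, COMP))) \<and>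
  (\<forall>k\<in>aO s. alab s k \<noteq> None) \<and> (\<forall>k\<in>aO s. acp s k = Some A1 \<or> acp s k = Some A2) \<and>
  (\<forall>k\<in>aO s. acp s k = Some A2 \<longrightarrow> (\<exists>v. alab s k = Some (v, COMP)))"

definition consist :: "nat list \<Rightarrow> (nat \<times> nat) set \<Rightarrow> bool" where
"consist L r \<longleftrightarrow> (\<forall>l1 b l2 a. L = l1 @ b # l2 \<longrightarrow> (a,b) \<in> r \<longrightarrow> a \<in> set l1)"

definition InvA :: "aqstate \<Rightarrow> bool" where
"InvA s \<longleftrightarrow> InvA0 s \<and> (\<exists>L. distinct L \<and> (\<forall>k\<in>set L. acp s k = Some A2) \<and>
   (\<forall>k\<in>aO s. (\<exists>v. alab s k = Some (v, COMP)) \<longrightarrow> k \<in> set L) \<and> consist L (aord s))"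

lemma snoc_split:
  assumes "L @ [c] = l1 @ b # l2"
  shows "(l2 = [] \<and> b = c \<and> l1 = L) \<or> (\<exists>l2'. L = l1 @ b # l2')"
proof (cases l2 rule: rev_exhaust)
  case Nil then show ?thesis using assms by simp
next
  case (snoc ys y) then show ?thesis using assms by (metis append.assoc append_Cons append1_eq_conv)
qed

lemma consist_mono: "consist L r \<Longrightarrow> r' \<subseteq> r \<Longrightarrow> consist L r'"
  unfolding consist_def by blast

lemma InvA_init: "InvA absq_init"
  by (auto simp: InvA_def InvA0_def absq_init_def consist_def intro!: exI[of _ "[]"])

lemma InvA_step:
  assumes "absq_step s a s1" "InvA s"
  shows "InvA s1"
proof -
  from assms(2) obtain L where I0: "InvA0 s" and L: "distinct L" "\<forall>k\<in>set L. acp s k = Some A2"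
    "\<forall>k\<in>aO s. (\<exists>v. alab s k = Some (v, COMP)) \<longrightarrow> k \<in> set L" "consist L (aord s)"
    unfolding InvA_def by blast
  show ?thesis
  proof (cases a)
    case (InvEnq d k)
    with assms(1) have ak: "acp s k = None" and s1: "s1 = s\<lparr>aO := insert k (aO s),
            aord := aord s \<union> {(k'', k) | k'' v. k'' \<in> aO s \<and> alab s k'' = Some (v, COMP)},
            alab := (alab s)(k \<mapsto> (d, PEND)),
            acp := (acp s)(k \<mapsto> A1)\<rparr>" by auto
    have kO: "k \<notin> aO s" using I0 ak unfolding InvA0_def by force
    have kL: "k \<notin> set L" using L(2) ak by force
    have "InvA0 s1" using I0 kO unfolding InvA0_def s1 by auto
    moreover have "consist L (aord s1)" using L(4) kL unfolding consist_def s1 by fastforce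
    ultimately show ?thesis unfolding InvA_def using L kO kL unfolding s1 by auto
  next
    case (InvDeq k)
    with assms(1) have ak: "acp s k = None" and s1: "s1 = s\<lparr>acp := (acp s)(k \<mapsto> R1)\<rparr>" by auto
    have kO: "k \<notin> aO s" using I0 ak unfolding InvA0_def by force
    have kL: "k \<notin> set L" using L(2) ak by force
    show ?thesis unfolding InvA_def using I0 L kO kL unfolding s1 InvA0_def by auto
  next
    case (RetEnq k)
    with assms(1) have ak: "acp s k = Some A1" and s1: "s1 = s\<lparr>alab := (if k \<in> aO s then (alab s)(k \<mapsto> (fst (the (alab s k)), COMP)) else alab s),
            acp := (acp s)(k \<mapsto> A2)\<rparr>" by auto
    have kL: "k \<notin> set L" using L(2) ak by force
    have "InvA0 s1" using I0 unfolding InvA0_def s1 by auto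
    moreover have "consist (L @ [k]) (aord s1)"
      unfolding consist_def
    proof (intro allI impI)
      fix l1 b l2 a assume sp: "L @ [k] = l1 @ b # l2" and ab: "(a, b) \<in> aord s1"
      then have ab0: "(a,b) \<in> aord s" by (simp add: s1)
      from snoc_split[OF sp] show "a \<in> set l1"
      proof
        assume "l2 = [] \<and> b = k \<and> l1 = L"
        then show ?thesis using ab0 I0 L(3) unfolding InvA0_def by blast
      next
        assume "\<exists>l2'. L = l1 @ b # l2'"
        then show ?thesis using L(4) ab0 unfolding consist_def by blast
      qed
    qed
    moreover have "\<forall>j\<in>aO s1. (\<exists>v. alab s1 j = Some (v, COMP)) \<longrightarrow> j \<in> set (L @ [k])"
      using L(3) unfolding s1 by auto
    ultimately show ?thesis unfolding InvA_def using L kL unfolding s1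
      by (intro conjI exI[of _ "L @ [k]"]) auto
  next
    case (RetDeq d k)
    with assms(1) have ak: "acp s k = Some R2" and s1: "s1 = s\<lparr>acp := (acp s)(k \<mapsto> R3)\<rparr>" by auto
    have kO: "k \<notin> aO s" using I0 ak unfolding InvA0_def by force
    have kL: "k \<notin> set L" using L(2) ak by force
    show ?thesis unfolding InvA_def using I0 L kO kL unfolding s1 InvA0_def by auto
  next
    case (LinEnq d k) then show ?thesis using assms(1) by simp
  next
    case Tau then show ?thesis using assms(1) by simp
  next
    case (LinDeq d k)
    with assms(1) have ak: "acp s k = Some R1" by auto
    have kO: "k \<notin> aO s" using I0 ak unfolding InvA0_def by force
    have kL: "k \<notin> set L" using L(2) ak by force
    from assms(1) LinDeq consider
      (ne) k' f where "k' \<in> aO s" "alab s k' = Some (d, f)" "s1 = s\<lparr>aO := aO s - {k'},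
                  aord := {(a, b). (a, b) \<in> aord s \<and> a \<noteq> k' \<and> b \<noteq> k'},
                  alab := (alab s)(k' := None),
                  arv := (arv s)(k \<mapsto> d),
                  acp := (acp s)(k \<mapsto> R2)\<rparr>"
    | (em) "s1 = s\<lparr>arv := (arv s)(k \<mapsto> EMPTY), acp := (acp s)(k \<mapsto> R2)\<rparr>"
      by auto
    then show ?thesis
    proof cases
      case ne
      have "consist L (aord s1)" by (rule consist_mono[OF L(4)]) (auto simp: ne(3))
      then show ?thesis unfolding InvA_def using I0 L kO kL unfolding ne(3) InvA0_def by auto
    next
      case em
      show ?thesis unfolding InvA_def using I0 L kO kL unfolding em InvA0_def by auto
    qed
  qed
qed

definition Cons :: "(nat \<Rightarrow> val) \<Rightarrow> aqstate \<Rightarrow> bool" where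
"Cons V s \<longleftrightarrow> (\<forall>k\<in>aO s. \<exists>f. alab s k = Some (V k, f))"

lemma Cons_step:
  assumes "absq_step s a s1" "Cons V s" "\<And>d k. a = InvEnq d k \<Longrightarrow> V k = d"
  shows "Cons V s1"
proof (cases a)
  case (InvEnq d k) then show ?thesis using assms by (auto simp: Cons_def)
next
  case (RetEnq k) then show ?thesis using assms by (auto simp: Cons_def)
next
  case (LinDeq d k) then show ?thesis using assms by (auto simp: Cons_def)
qed (use assms in \<open>auto simp: Cons_def\<close>)

definition goodks :: "aqstate \<Rightarrow> nat list \<Rightarrow> bool" where
"goodks s ks \<longleftrightarrow> distinct ks \<and> set ks \<subseteq> aO s \<and>
   (\<forall>k\<in>aO s. (\<exists>v. alab s k = Some (v, COMP)) \<longrightarrow> k \<in> set ks) \<and> consist ks (aord s)"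

definition absrep :: "(nat \<Rightarrow> val) \<Rightarrow> aqstate \<Rightarrow> nat list \<Rightarrow> q0state" where
"absrep V s ks = \<lparr>q = rev (map V ks),
   qin = (\<lambda>k. if acp s k = Some A1 \<or> acp s k = Some A2 then Some (V k) else None),
   qrv = arv s,
   qcp = (\<lambda>k. if acp s k = Some A1 then (if k \<in> set ks \<or> k \<notin> aO s then Some A else Some A1) else acp s k)\<rparr>"

lemma trans_AbsQ0[simp]: "trans AbsQ0 = absq0_step" by (simp add: AbsQ0_def)
lemma trans_AbsQ[simp]: "trans AbsQ = absq_step" by (simp add: AbsQ_def)

lemma replay:
  "distinct js \<Longrightarrow> (\<forall>j\<in>set js. qcp u j = Some A1 \<and> qin u j = Some (V j)) \<Longrightarrow>
   steps AbsQ0 u (map (\<lambda>j. LinEnq (V j) j) js)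
     (u\<lparr>q := rev (map V js) @ q u, qcp := (\<lambda>k. if k \<in> set js then Some A else qcp u k)\<rparr>)"
proof (induction js arbitrary: u)
  case Nil then show ?case by (simp add: steps.steps_nil)
next
  case (Cons j js)
  define u1 where "u1 = u\<lparr>q := V j # q u, qcp := (qcp u)(j \<mapsto> A)\<rparr>"
  have st: "absq0_step u (LinEnq (V j) j) u1" using Cons.prems unfolding u1_def by auto
  have "steps AbsQ0 u1 (map (\<lambda>j. LinEnq (V j) j) js)
     (u1\<lparr>q := rev (map V js) @ q u1, qcp := (\<lambda>k. if k \<in> set js then Some A else qcp u1 k)\<rparr>)"
    using Cons.prems by (intro Cons.IH) (auto simp: u1_def)
  moreover have "u1\<lparr>q := rev (map V js) @ q u1, qcp := (\<lambda>k. if k \<in> set js then Some A else qcp u1 k)\<rparr>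
     = u\<lparr>q := rev (map V (j # js)) @ q u, qcp := (\<lambda>k. if k \<in> set (j # js) then Some A else qcp u k)\<rparr>"
    by (auto simp: u1_def fun_eq_iff)
  ultimately show ?case using st by (auto intro: steps.steps_cons)
qed

lemma steps2: "trans L s a s1 \<Longrightarrow> steps L s1 w s2 \<Longrightarrow> steps L s (a # w) s2"
  by (rule steps.steps_cons)

lemma steps1: "trans L s a s1 \<Longrightarrow> steps L s [a] s1"
  by (rule steps.steps_cons) (auto intro: steps.steps_nil)


lemma back_InvEnq:
  assumes st: "absq_step s (InvEnq d k) s1" and IA: "InvA s" and VI: "V k = d"
    and g1: "goodks s1 ks1"
  shows "\<exists>ks w0. goodks s ks \<and> steps AbsQ0 (absrep V s ks) w0 (absrep V s1 ks1) \<and> proj Gam w0 = [InvEnq d k]"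
proof -
  from st have ak: "acp s k = None" and dne: "d \<noteq> EMPTY" and s1: "s1 = s\<lparr>aO := insert k (aO s),
            aord := aord s \<union> {(k'', k) | k'' v. k'' \<in> aO s \<and> alab s k'' = Some (v, COMP)},
            alab := (alab s)(k \<mapsto> (d, PEND)),
            acp := (acp s)(k \<mapsto> A1)\<rparr>" by auto
  have I0: "InvA0 s" using IA by (simp add: InvA_def)
  have kO: "k \<notin> aO s" using I0 ak unfolding InvA0_def by force
  from g1 have d1: "distinct ks1" and sub1: "set ks1 \<subseteq> insert k (aO s)"
    and comp1: "\<forall>j\<in>aO s1. (\<exists>v. alab s1 j = Some (v, COMP)) \<longrightarrow> j \<in> set ks1"
    and con1: "consist ks1 (aord s1)"
    unfolding goodks_def s1 by auto
  define u0' where "u0' = (absrep V s ks)"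
  show ?thesis
  proof (cases "k \<in> set ks1")
    case False
    have g: "goodks s ks1" unfolding goodks_def
    proof (intro conjI)
      show "distinct ks1" by fact
      show "set ks1 \<subseteq> aO s" using sub1 False by auto
      show "\<forall>j\<in>aO s. (\<exists>v. alab s j = Some (v, COMP)) \<longrightarrow> j \<in> set ks1"
      proof (intro ballI impI)
        fix j assume j: "j \<in> aO s" and c: "\<exists>v. alab s j = Some (v, COMP)"
        have "j \<noteq> k" using kO j by auto
        have "j \<in> aO s1" "\<exists>v. alab s1 j = Some (v, COMP)" using j c \<open>j \<noteq> k\<close> unfolding s1 by auto
        then show "j \<in> set ks1" using comp1 by blast
      qed
      show "consist ks1 (aord s)" by (rule consist_mono[OF con1]) (auto simp: s1)
    qed
    have "absq0_step (absrep V s ks1) (InvEnq d k) (absrep V s1 ks1)"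
      using ak dne kO False VI unfolding s1 absrep_def by (auto simp: fun_eq_iff)
    then show ?thesis using g by (intro exI[of _ ks1] exI[of _ "[InvEnq d k]"]) (auto intro: steps1 simp: proj_def Gam_def Calls_def)
  next
    case True
    then obtain pre post where sp: "ks1 = pre @ k # post" by (meson split_list)
    have dp: "distinct (k # post)" "k \<notin> set pre" "set pre \<inter> set post = {}" using d1 sp by auto
    have postO: "\<forall>j\<in>set post. j \<in> aO s" using sub1 sp d1 by auto
    have postP: "\<forall>j\<in>set post. \<not> (\<exists>v. alab s j = Some (v, COMP))"
    proof (intro ballI notI)
      fix j assume jp: "j \<in> set post" and "\<exists>v. alab s j = Some (v, COMP)"
      then have "(j, k) \<in> aord s1" using postO unfolding s1 by auto
      then have "j \<in> set pre" using con1 sp unfolding consist_def by blast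
      then show False using dp jp by auto
    qed
    have postA1: "\<forall>j\<in>set post. acp s j = Some A1"
      using postO postP I0 unfolding InvA0_def by blast
    have g: "goodks s pre" unfolding goodks_def
    proof (intro conjI)
      show "distinct pre" using d1 sp by auto
      show "set pre \<subseteq> aO s" using sub1 sp dp by auto
      show "\<forall>j\<in>aO s. (\<exists>v. alab s j = Some (v, COMP)) \<longrightarrow> j \<in> set pre"
      proof (intro ballI impI)
        fix j assume "j \<in> aO s" "\<exists>v. alab s j = Some (v, COMP)"
        moreover then have "j \<noteq> k" using kO by auto
        ultimately have "j \<in> set ks1" using comp1 unfolding s1 by auto
        then show "j \<in> set pre" using sp postP \<open>j \<noteq> k\<close> \<open>\<exists>v. alab s j = Some (v, COMP)\<close> by auto
      qed
      show "consist pre (aord s)" unfolding consist_def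
      proof (intro allI impI)
        fix l1 b l2 a assume "pre = l1 @ b # l2" "(a, b) \<in> aord s"
        then have "ks1 = l1 @ b # (l2 @ k # post)" "(a, b) \<in> aord s1" using sp unfolding s1 by auto
        then show "a \<in> set l1" using con1 unfolding consist_def by blast
      qed
    qed
    define u1 where "u1 = (absrep V s pre)\<lparr>qin := (qin (absrep V s pre))(k \<mapsto> d), qcp := (qcp (absrep V s pre))(k \<mapsto> A1)\<rparr>"
    have st1: "absq0_step (absrep V s pre) (InvEnq d k) u1"
      using ak dne unfolding u1_def absrep_def by auto
    have st2: "steps AbsQ0 u1 (map (\<lambda>j. LinEnq (V j) j) (k # post))
     (u1\<lparr>q := rev (map V (k # post)) @ q u1, qcp := (\<lambda>j. if j \<in> set (k # post) then Some A else qcp u1 j)\<rparr>)"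
    proof (rule replay)
      show "distinct (k # post)" by fact
      show "\<forall>j\<in>set (k # post). qcp u1 j = Some A1 \<and> qin u1 j = Some (V j)"
        using postA1 dp postO VI unfolding u1_def absrep_def by auto
    qed
    have eq: "u1\<lparr>q := rev (map V (k # post)) @ q u1, qcp := (\<lambda>j. if j \<in> set (k # post) then Some A else qcp u1 j)\<rparr>
       = absrep V s1 ks1"
      using sp dp postA1 postO kO VI unfolding u1_def absrep_def s1 by (auto simp: fun_eq_iff)
    have "steps AbsQ0 (absrep V s pre) (InvEnq d k # map (\<lambda>j. LinEnq (V j) j) (k # post)) (absrep V s1 ks1)"
      using steps2[of AbsQ0, OF _ st2[unfolded eq]] st1 by simp
    moreover have "proj Gam (InvEnq d k # map (\<lambda>j. LinEnq (V j) j) (k # post)) = [InvEnq d k]"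
      unfolding proj_def Gam_def Calls_def Rets_def LinDeqs_def by (auto simp: filter_empty_conv)
    ultimately show ?thesis using g by blast
  qed
qed

lemma back_simple:
  assumes st: "absq_step s a s1" and IA: "InvA s"
    and a: "a = InvDeq k \<or> a = RetEnq k \<or> a = RetDeq d k"
    and g1: "goodks s1 ks1"
  shows "\<exists>ks w0. goodks s ks \<and> steps AbsQ0 (absrep V s ks) w0 (absrep V s1 ks1) \<and> proj Gam w0 = [a]"
proof -
  have I0: "InvA0 s" using IA by (simp add: InvA_def)
  have aG: "a \<in> Gam" using a by (auto simp: Gam_def Calls_def Rets_def)
  have g: "goodks s ks1 \<and> absq0_step (absrep V s ks1) a (absrep V s1 ks1)"
    using a
  proof (elim disjE)
    assume a: "a = InvDeq k"
    with st have ak: "acp s k = None" and s1: "s1 = s\<lparr>acp := (acp s)(k \<mapsto> R1)\<rparr>" by auto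
    have kO: "k \<notin> aO s" using I0 ak unfolding InvA0_def by force
    have "goodks s ks1" using g1 unfolding goodks_def s1 by simp
    moreover have "absq0_step (absrep V s ks1) a (absrep V s1 ks1)"
      using ak kO unfolding a s1 absrep_def by (auto simp: fun_eq_iff)
    ultimately show ?thesis by blast
  next
    assume a: "a = RetEnq k"
    with st have ak: "acp s k = Some A1" and s1: "s1 = s\<lparr>alab := (if k \<in> aO s then (alab s)(k \<mapsto> (fst (the (alab s k)), COMP)) else alab s),
            acp := (acp s)(k \<mapsto> A2)\<rparr>" by auto
    have kin: "k \<in> aO s \<Longrightarrow> k \<in> set ks1" using g1 unfolding goodks_def s1 by auto
    have "goodks s ks1" unfolding goodks_def
    proof (intro conjI)
      show "distinct ks1" "set ks1 \<subseteq> aO s" "consist ks1 (aord s)" using g1 unfolding goodks_def s1 by auto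
      show "\<forall>j\<in>aO s. (\<exists>v. alab s j = Some (v, COMP)) \<longrightarrow> j \<in> set ks1"
      proof (intro ballI impI)
        fix j assume j: "j \<in> aO s" and c: "\<exists>v. alab s j = Some (v, COMP)"
        show "j \<in> set ks1"
        proof (cases "j = k")
          case True then show ?thesis using kin j by simp
        next
          case False
          then have "j \<in> aO s1" "\<exists>v. alab s1 j = Some (v, COMP)" using j c unfolding s1 by auto
          then show ?thesis using g1 unfolding goodks_def by blast
        qed
      qed
    qed
    moreover have "absq0_step (absrep V s ks1) a (absrep V s1 ks1)"
      using ak kin unfolding a s1 absrep_def by (auto simp: fun_eq_iff)
    ultimately show ?thesis by blast
  next
    assume a: "a = RetDeq d k"
    with st have ak: "acp s k = Some R2" "arv s k = Some d" and s1: "s1 = s\<lparr>acp := (acp s)(k \<mapsto> R3)\<rparr>" by auto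
    have "goodks s ks1" using g1 unfolding goodks_def s1 by simp
    moreover have "absq0_step (absrep V s ks1) a (absrep V s1 ks1)"
      using ak unfolding a s1 absrep_def by (auto simp: fun_eq_iff)
    ultimately show ?thesis by blast
  qed
  then show ?thesis using aG by (intro exI[of _ ks1] exI[of _ "[a]"]) (auto intro: steps1 simp: proj_def)
qed

lemma back_LinDeq:
  assumes st: "absq_step s (LinDeq d k) s1" and IA: "InvA s" and C: "Cons V s" and dne: "d \<noteq> EMPTY"
    and g1: "goodks s1 ks1"
  shows "\<exists>ks w0. goodks s ks \<and> steps AbsQ0 (absrep V s ks) w0 (absrep V s1 ks1) \<and> proj Gam w0 = [LinDeq d k]"
proof -
  have I0: "InvA0 s" using IA by (simp add: InvA_def)
  from st dne obtain k' f where ak: "acp s k = Some R1" and k'O: "k' \<in> aO s"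
    and mini: "\<forall>k''\<in>aO s. (k'', k') \<notin> aord s" and lk': "alab s k' = Some (d, f)"
    and s1: "s1 = s\<lparr>aO := aO s - {k'},
                  aord := {(a, b). (a, b) \<in> aord s \<and> a \<noteq> k' \<and> b \<noteq> k'},
                  alab := (alab s)(k' := None),
                  arv := (arv s)(k \<mapsto> d),
                  acp := (acp s)(k \<mapsto> R2)\<rparr>" by auto
  have Vk': "V k' = d" using C k'O lk' unfolding Cons_def by auto
  have kO: "k \<notin> aO s" using I0 ak unfolding InvA0_def by force
  have kk': "k \<noteq> k'" using kO k'O by auto
  from g1 have d1: "distinct ks1" and sub1: "set ks1 \<subseteq> aO s - {k'}"
    and comp1: "\<forall>j\<in>aO s1. (\<exists>v. alab s1 j = Some (v, COMP)) \<longrightarrow> j \<in> set ks1"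
    and con1: "consist ks1 (aord s1)"
    unfolding goodks_def s1 by auto
  have g: "goodks s (k' # ks1)" unfolding goodks_def
  proof (intro conjI)
    show "distinct (k' # ks1)" using d1 sub1 by auto
    show "set (k' # ks1) \<subseteq> aO s" using sub1 k'O by auto
    show "\<forall>j\<in>aO s. (\<exists>v. alab s j = Some (v, COMP)) \<longrightarrow> j \<in> set (k' # ks1)"
    proof (intro ballI impI)
      fix j assume j: "j \<in> aO s" and c: "\<exists>v. alab s j = Some (v, COMP)"
      show "j \<in> set (k' # ks1)"
      proof (cases "j = k'")
        case False
        then have "j \<in> aO s1" "\<exists>v. alab s1 j = Some (v, COMP)" using j c unfolding s1 by auto
        then show ?thesis using comp1 by auto
      qed simp
    qed
    show "consist (k' # ks1) (aord s)" unfolding consist_def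
    proof (intro allI impI)
      fix l1 b l2 a assume sp: "k' # ks1 = l1 @ b # l2" and ab: "(a, b) \<in> aord s"
      show "a \<in> set l1"
      proof (cases l1)
        case Nil
        then have "b = k'" using sp by simp
        moreover have "a \<in> aO s" using I0 ab unfolding InvA0_def by blast
        ultimately show ?thesis using mini ab by blast
      next
        case (Cons c l1')
        then have "c = k'" "ks1 = l1' @ b # l2" using sp by auto
        show ?thesis
        proof (cases "a = k'")
          case True then show ?thesis using Cons \<open>c = k'\<close> by simp
        next
          case False
          have "b \<noteq> k'" using sub1 \<open>ks1 = l1' @ b # l2\<close> by auto
          then have "(a, b) \<in> aord s1" using ab False unfolding s1 by auto
          then have "a \<in> set l1'" using con1 \<open>ks1 = l1' @ b # l2\<close> unfolding consist_def by blast
          then show ?thesis using Cons by simp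
        qed
      qed
    qed
  qed
  have "absq0_step (absrep V s (k' # ks1)) (LinDeq d k) (absrep V s1 ks1)"
  proof -
    have "qcp (absrep V s (k' # ks1)) k = Some R1" using ak unfolding absrep_def by simp
    moreover have "q (absrep V s (k' # ks1)) = q (absrep V s1 ks1) @ [d]"
      using Vk' unfolding absrep_def by simp
    moreover have "absrep V s1 ks1 = (absrep V s (k' # ks1))\<lparr>q := q (absrep V s1 ks1),
        qrv := (qrv (absrep V s (k' # ks1)))(k \<mapsto> d), qcp := (qcp (absrep V s (k' # ks1)))(k \<mapsto> R2)\<rparr>"
      using ak kk' k'O unfolding absrep_def s1 by (auto simp: fun_eq_iff)
    ultimately show ?thesis by (metis absq0_step.simps(5))
  qed
  then show ?thesis using g
    by (intro exI[of _ "k' # ks1"] exI[of _ "[LinDeq d k]"]) (auto intro: steps1 simp: proj_def Gam_def LinDeqs_def)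
qed

lemma back_step:
  assumes st: "absq_step s a s1" and IA: "InvA s" and C: "Cons V s"
    and VI: "\<And>d k. a = InvEnq d k \<Longrightarrow> V k = d" and ne: "\<forall>k. a \<noteq> LinDeq EMPTY k"
    and g1: "goodks s1 ks1"
  shows "\<exists>ks w0. goodks s ks \<and> steps AbsQ0 (absrep V s ks) w0 (absrep V s1 ks1) \<and> proj Gam w0 = proj Gam [a]"
proof (cases a)
  case (InvEnq d k)
  have "\<exists>ks w0. goodks s ks \<and> steps AbsQ0 (absrep V s ks) w0 (absrep V s1 ks1) \<and> proj Gam w0 = [InvEnq d k]"
    using st IA VI g1 InvEnq by (intro back_InvEnq[of s d k s1 V ks1]) auto
  then show ?thesis using InvEnq by (simp add: proj_def Gam_def Calls_def)
next
  case (InvDeq k)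
  then show ?thesis using back_simple[OF st IA _ g1, of k undefined V] by (simp add: proj_def Gam_def Calls_def)
next
  case (RetEnq k)
  then show ?thesis using back_simple[OF st IA _ g1, of k undefined V] by (simp add: proj_def Gam_def Rets_def)
next
  case (RetDeq d k)
  then show ?thesis using back_simple[OF st IA _ g1, of k d V] by (simp add: proj_def Gam_def Rets_def)
next
  case (LinDeq d k)
  then have "d \<noteq> EMPTY" using ne by auto
  have "\<exists>ks w0. goodks s ks \<and> steps AbsQ0 (absrep V s ks) w0 (absrep V s1 ks1) \<and> proj Gam w0 = [LinDeq d k]"
    using st IA C g1 LinDeq \<open>d \<noteq> EMPTY\<close> by (intro back_LinDeq[of s d k s1 V ks1]) auto
  then show ?thesis using LinDeq by (simp add: proj_def Gam_def LinDeqs_def)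
next
  case (LinEnq d k) then show ?thesis using st by simp
next
  case Tau then show ?thesis using st by simp
qed

lemma back_run:
  "steps AbsQ s w s' \<Longrightarrow> InvA s \<Longrightarrow> Cons V s \<Longrightarrow> (\<forall>d k. InvEnq d k \<in> set w \<longrightarrow> V k = d) \<Longrightarrow>
   (\<forall>k. LinDeq EMPTY k \<notin> set w) \<Longrightarrow> goodks s' ks' \<Longrightarrow>
   \<exists>ks w0. goodks s ks \<and> steps AbsQ0 (absrep V s ks) w0 (absrep V s' ks') \<and> proj Gam w0 = proj Gam w"
proof (induction rule: steps.induct)
  case (steps_nil s)
  then show ?case by (intro exI[of _ ks'] exI[of _ "[]"]) (auto intro: steps.steps_nil)
next
  case (steps_cons s a s1 w s'')
  have st: "absq_step s a s1" using steps_cons.hyps(1) by simp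
  have IA1: "InvA s1" using InvA_step[OF st steps_cons.prems(1)] .
  have C1: "Cons V s1" using Cons_step[OF st steps_cons.prems(2)] steps_cons.prems(3) by auto
  obtain ks1 w1 where g1: "goodks s1 ks1" and r1: "steps AbsQ0 (absrep V s1 ks1) w1 (absrep V s'' ks')"
    and p1: "proj Gam w1 = proj Gam w"
    using steps_cons.IH[OF IA1 C1] steps_cons.prems(3,4,5) by auto
  obtain ks w0 where g: "goodks s ks" and r0: "steps AbsQ0 (absrep V s ks) w0 (absrep V s1 ks1)"
    and p0: "proj Gam w0 = proj Gam [a]"
  proof -
    have VIa: "\<And>d k. a = InvEnq d k \<Longrightarrow> V k = d" using steps_cons.prems(3) by auto
    have nea: "\<forall>k. a \<noteq> LinDeq EMPTY k" using steps_cons.prems(4) by auto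
    show ?thesis using back_step[OF st steps_cons.prems(1,2) VIa nea g1] that by blast
  qed
  have "steps AbsQ0 (absrep V s ks) (w0 @ w1) (absrep V s'' ks')" using r0 r1 by (rule steps_append)
  moreover have "proj Gam (w0 @ w1) = proj Gam (a # w)"
    using p0 p1 unfolding proj_def by simp
  ultimately show ?case using g by blast
qed

lemma filter_split:
  "filter P xs = l1 @ b # l2 \<Longrightarrow> \<exists>m1 m2. xs = m1 @ b # m2 \<and> filter P m1 = l1"
proof (induction xs arbitrary: l1)
  case Nil then show ?case by simp
next
  case (Cons x xs)
  show ?case
  proof (cases "P x")
    case True
    show ?thesis
    proof (cases l1)
      case Nil then show ?thesis using Cons.prems True by (intro exI[of _ "[]"] exI[of _ xs]) auto
    next
      case (Cons y l1')
      then have "x = y" "filter P xs = l1' @ b # l2" using Cons.prems True by auto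
      then obtain m1 m2 where "xs = m1 @ b # m2" "filter P m1 = l1'" using Cons.IH by blast
      then show ?thesis using True \<open>x = y\<close> Cons by (intro exI[of _ "x # m1"] exI[of _ m2]) auto
    qed
  next
    case False
    then have "filter P xs = l1 @ b # l2" using Cons.prems by simp
    then obtain m1 m2 where "xs = m1 @ b # m2" "filter P m1 = l1" using Cons.IH by blast
    then show ?thesis using False by (intro exI[of _ "x # m1"] exI[of _ m2]) auto
  qed
qed

lemma totality:
  assumes "InvA s" shows "\<exists>ks. goodks s ks"
proof -
  from assms obtain L where I0: "InvA0 s" and L: "distinct L"
    "\<forall>k\<in>aO s. (\<exists>v. alab s k = Some (v, COMP)) \<longrightarrow> k \<in> set L" "consist L (aord s)"
    unfolding InvA_def by blast
  define ks where "ks = filter (\<lambda>k. k \<in> aO s) L"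
  have "goodks s ks" unfolding goodks_def
  proof (intro conjI)
    show "distinct ks" using L(1) unfolding ks_def by simp
    show "set ks \<subseteq> aO s" unfolding ks_def by auto
    show "\<forall>k\<in>aO s. (\<exists>v. alab s k = Some (v, COMP)) \<longrightarrow> k \<in> set ks" using L(2) unfolding ks_def by auto
    show "consist ks (aord s)" unfolding consist_def
    proof (intro allI impI)
      fix l1 b l2 a assume "ks = l1 @ b # l2" "(a, b) \<in> aord s"
      then obtain m1 m2 where "L = m1 @ b # m2" "filter (\<lambda>k. k \<in> aO s) m1 = l1"
        using filter_split unfolding ks_def by metis
      then have "a \<in> set m1" using L(3) \<open>(a, b) \<in> aord s\<close> unfolding consist_def by blast
      moreover have "a \<in> aO s" using I0 \<open>(a, b) \<in> aord s\<close> unfolding InvA0_def by blast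
      ultimately show "a \<in> set l1" using \<open>filter (\<lambda>k. k \<in> aO s) m1 = l1\<close> by auto
    qed
  qed
  then show ?thesis by blast
qed

lemma acp_keep: "absq_step s a s1 \<Longrightarrow> acp s k \<noteq> None \<Longrightarrow> acp s1 k \<noteq> None"
  by (cases a) auto

lemma noinv: "steps AbsQ s w s' \<Longrightarrow> acp s k \<noteq> None \<Longrightarrow> InvEnq d k \<notin> set w"
proof (induction rule: steps.induct)
  case (steps_nil s) then show ?case by simp
next
  case (steps_cons s a s1 w s'')
  then have st: "absq_step s a s1" by simp
  have "a \<noteq> InvEnq d k" using st steps_cons.prems by auto
  moreover have "acp s1 k \<noteq> None" using acp_keep[OF st steps_cons.prems] .
  ultimately show ?case using steps_cons.IH by simp
qed

lemma inv_unique: "steps AbsQ s w s' \<Longrightarrow> InvEnq d k \<in> set w \<Longrightarrow> InvEnq d' k \<in> set w \<Longrightarrow> d = d'"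
proof (induction rule: steps.induct)
  case (steps_nil s) then show ?case by simp
next
  case (steps_cons s a s1 w s'')
  then have st: "absq_step s a s1" by simp
  show ?case
  proof (cases "a = InvEnq d k \<or> a = InvEnq d' k")
    case True
    then have "acp s1 k \<noteq> None" using st by auto
    then have "InvEnq d k \<notin> set w" "InvEnq d' k \<notin> set w" using noinv[OF steps_cons.hyps(2)] by auto
    then show ?thesis using steps_cons.prems True by auto
  next
    case False then show ?thesis using steps_cons.prems steps_cons.IH by auto
  qed
qed

lemma InvA_steps: "steps AbsQ s w s' \<Longrightarrow> InvA s \<Longrightarrow> InvA s'"
  by (induction rule: steps.induct) (auto intro: InvA_step)

lemma Cons_steps: "steps AbsQ s w s' \<Longrightarrow> Cons V s \<Longrightarrow> (\<forall>d k. InvEnq d k \<in> set w \<longrightarrow> V k = d) \<Longrightarrow> Cons V s'"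
proof (induction rule: steps.induct)
  case (steps_nil s) then show ?case by simp
next
  case (steps_cons s a s1 w s'')
  have "Cons V s1" using Cons_step[of s a s1 V] steps_cons by auto
  then show ?case using steps_cons by auto
qed

lemma absq_refines:
  assumes st: "steps AbsQ absq_init w s'" and ne: "\<forall>k. LinDeq EMPTY k \<notin> set w"
  shows "\<exists>w0 u0. steps AbsQ0 absq0_init w0 u0 \<and> proj Gam w0 = proj Gam w"
proof -
  define V where "V k = (SOME d. InvEnq d k \<in> set w)" for k
  have VI: "\<forall>d k. InvEnq d k \<in> set w \<longrightarrow> V k = d"
  proof (intro allI impI)
    fix d k assume h: "InvEnq d k \<in> set w"
    then have "InvEnq (V k) k \<in> set w" unfolding V_def by (rule someI)
    then show "V k = d" using inv_unique[OF st] h by blast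
  qed
  have C0: "Cons V absq_init" by (simp add: Cons_def absq_init_def)
  have IA': "InvA s'" using InvA_steps[OF st InvA_init] .
  obtain ks' where g': "goodks s' ks'" using totality[OF IA'] by blast
  obtain ks w0 where g: "goodks absq_init ks" and r: "steps AbsQ0 (absrep V absq_init ks) w0 (absrep V s' ks')"
    and p: "proj Gam w0 = proj Gam w"
    using back_run[OF st InvA_init C0 VI ne g'] by blast
  have "ks = []" using g unfolding goodks_def absq_init_def by auto
  then have "absrep V absq_init ks = absq0_init" by (simp add: absrep_def absq_init_def absq0_init_def)
  then show ?thesis using r p by auto
qed

lemma hwq_noEMPTY: "steps HWQ s w s' \<Longrightarrow> LinDeq EMPTY k \<notin> set w"
  by (induction rule: steps.induct) (auto simp: HWQ_def)

theorem mainTheorem3: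
  shows "(\<exists>fs. is_fwd_sim (Calls \<union> Rets \<union> LinDeqs) HWQ AbsQ fs)
       \<and> gamma_refines (Calls \<union> Rets \<union> LinDeqs) HWQ AbsQ0
       \<and> refines HWQ AbsQ0"
proof -
  have F: "is_fwd_sim Gam HWQ AbsQ (\<lambda>s u. \<exists>ix. INV s u ix)" by (rule fwd_sim_HWQ)
  have G: "proj_traces HWQ Gam \<subseteq> proj_traces AbsQ0 Gam"
  proof
    fix x assume "x \<in> proj_traces HWQ Gam"
    then obtain w s where x: "x = proj Gam w" and st: "steps HWQ hwq_init w s"
      unfolding proj_traces_def traces_def by (auto simp: HWQ_def)
    have "\<exists>ix. INV hwq_init absq_init ix" using INV_init by blast
    then obtain u' w' where st': "steps AbsQ absq_init w' u'" and pw: "proj Gam w' = proj Gam w"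
      using fwd_sim_traces[OF F st] by blast
    have ne: "\<forall>k. LinDeq EMPTY k \<notin> set w'"
    proof (intro allI notI)
      fix k assume "LinDeq EMPTY k \<in> set w'"
      then have "LinDeq EMPTY k \<in> set (proj Gam w')" unfolding proj_def by (auto simp: Gam_def LinDeqs_def)
      then have "LinDeq EMPTY k \<in> set w" using pw unfolding proj_def by simp
      then show False using hwq_noEMPTY[OF st] by blast
    qed
    obtain w0 u0 where s0: "steps AbsQ0 absq0_init w0 u0" and p0: "proj Gam w0 = proj Gam w'"
      using absq_refines[OF st' ne] by blast
    have "w0 \<in> traces AbsQ0" unfolding traces_def using s0 by (auto simp: AbsQ0_def)
    moreover have "x = proj Gam w0" using x p0 pw by simp
    ultimately show "x \<in> proj_traces AbsQ0 Gam" unfolding proj_traces_def by blast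
  qed
  have R: "refines HWQ AbsQ0"
    unfolding refines_def
  proof
    fix x assume "x \<in> proj_traces HWQ (Calls \<union> Rets)"
    then obtain w where x: "x = proj (Calls \<union> Rets) w" and w: "w \<in> traces HWQ"
      unfolding proj_traces_def by blast
    have "proj Gam w \<in> proj_traces AbsQ0 Gam" using G w unfolding proj_traces_def by blast
    then obtain w0 where w0: "w0 \<in> traces AbsQ0" and pe: "proj Gam w0 = proj Gam w"
      unfolding proj_traces_def by (metis imageE)
    have sub: "\<And>v. proj (Calls \<union> Rets) v = proj (Calls \<union> Rets) (proj Gam v)"
      unfolding proj_def Gam_def by (simp add: filter_filter) (metis UnCI)
    have "x = proj (Calls \<union> Rets) w0" using x pe sub by metis
    then show "x \<in> proj_traces AbsQ0 (Calls \<union> Rets)" using w0 unfolding proj_traces_def by blast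
  qed
  show ?thesis using F G R unfolding gamma_refines_def Gam_def by blast
qed


end
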